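(* Let $(E,\tau)$ be a locally solid vector lattice, where $\tau$ is locally interval complete solidly submetrisable, and let $F$ be a regular vector sublattice of $E$. Let $(x_\alpha)_{\alpha\in A}$ be a net in $F$ and let $x\in F$ be such that $x_\alpha\to x$ in $\tau$. If $A$ has a largest element $\alpha_{\mathrm{largest}}$, then $x=x_{\alpha_{\mathrm{largest}}}$. If $A$ has no largest element, then one can choose any $\widetilde\alpha_1\in A$, then find an $\alpha_1\in A$, then choose any $\widetilde\alpha_2\in A$, then find an $\alpha_2\in A$, etc., such that: (1) $\alpha_1<\alpha_2<\alpha_3<\dotsb$; (2) $\alpha_n>\widetilde\alpha_n$ for all $n\geq1$; (3) $x_{\alpha_n}$ uo-converges to $x$ in $F$ as $n\to\infty$. In particular, for arbitrary $A$ there exist indices $\alpha_1\leq\alpha_2\leq\alpha_3\leq\dotsb$ such that $x_{\alpha_n}$ uo-converges to $x$ in $F$, and if $A$ has no largest element these indices can be chosen with $\alpha_1<\alpha_2<\alpha_3<\dotsb$.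
   Context: All vector lattices are real and Archimedean; linear topologies are Hausdorff. A locally solid topology on a vector lattice is a linear topology such that zero has a neighbourhood basis of solid sets. A net $(x_\alpha)$ in a vector lattice $G$ order converges to $x$ in $G$ if there is a net $(y_\beta)$ in $G$ with $y_\beta\downarrow0$ such that for each $\beta_0$ there is $\alpha_0$ with $|x_\alpha-x|\leq y_{\beta_0}$ for all $\alpha\geq\alpha_0$; it uo-converges to $x$ in $G$ if $|x_\alpha-x|\wedge|y|$ order converges to $0$ in $G$ for every $y\in G$. A vector sublattice $F$ of $E$ is regular if every net in $F$ that order converges in $F$ to an element of $F$ also order converges in $E$ to it. A locally solid topology $\tau$ on $E$ is locally interval complete solidly submetrisable if for every $x\in E^+$ there exists a metrisable locally solid topology $\widetilde\tau_x$ on the band $B_x$ generated by $x$ such that $\tau|_{B_x}$ is finer than $\widetilde\tau_x$ and every $\widetilde\tau_x$-Cauchy sequence in $[0,x]$ is $\widetilde\tau_x$-convergent to an element of $[0,x]$. *)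

theory Defs
  imports "HOL-Analysis.Analysis" "HOL-Library.Lattice_Algebras"
begin

text \<open>Vector lattices are modelled as a type of class
  ordered_real_vector + lattice_ab_group_add_abs (so abs x = sup x (-x)).
  Sub-objects (sublattices, bands) are carrier sets.\<close>


definition directed_set :: "'i set \<Rightarrow> ('i \<Rightarrow> 'i \<Rightarrow> bool) \<Rightarrow> bool" where
  "directed_set A le \<longleftrightarrow> A \<noteq> {} \<and> (\<forall>a\<in>A. le a a)
     \<and> (\<forall>a\<in>A. \<forall>b\<in>A. \<forall>c\<in>A. le a b \<longrightarrow> le b c \<longrightarrow> le a c)
     \<and> (\<forall>a\<in>A. \<forall>b\<in>A. \<exists>c\<in>A. le a c \<and> le b c)"

definition strictly :: "('i \<Rightarrow> 'i \<Rightarrow> bool) \<Rightarrow> 'i \<Rightarrow> 'i \<Rightarrow> bool" where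
  "strictly le a b \<longleftrightarrow> le a b \<and> \<not> le b a"

definition archimedean_vl :: "'a::{ordered_real_vector,lattice_ab_group_add_abs} set \<Rightarrow> bool" where
  "archimedean_vl S \<longleftrightarrow> (\<forall>x\<in>S. \<forall>y\<in>S. (\<forall>n::nat. real n *\<^sub>R x \<le> y) \<longrightarrow> x \<le> 0)"

definition vector_sublattice :: "'a::{ordered_real_vector,lattice_ab_group_add_abs} set \<Rightarrow> bool" where
  "vector_sublattice S \<longleftrightarrow> 0 \<in> S \<and> (\<forall>x\<in>S. \<forall>y\<in>S. x + y \<in> S \<and> sup x y \<in> S \<and> inf x y \<in> S)
     \<and> (\<forall>c. \<forall>x\<in>S. c *\<^sub>R x \<in> S)"

definition solid_in :: "'a::{ordered_real_vector,lattice_ab_group_add_abs} set \<Rightarrow> 'a set \<Rightarrow> bool" where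
  "solid_in S V \<longleftrightarrow> V \<subseteq> S \<and> (\<forall>x\<in>V. \<forall>y\<in>S. \<bar>y\<bar> \<le> \<bar>x\<bar> \<longrightarrow> y \<in> V)"

definition linear_topology_on :: "'a::{ordered_real_vector,lattice_ab_group_add_abs} set \<Rightarrow> 'a topology \<Rightarrow> bool" where
  "linear_topology_on S T \<longleftrightarrow> topspace T = S \<and> Hausdorff_space T
     \<and> continuous_map (prod_topology T T) T (\<lambda>(x,y). x + y)
     \<and> continuous_map (prod_topology euclideanreal T) T (\<lambda>(c,x). c *\<^sub>R x)"

definition locally_solid_on :: "'a::{ordered_real_vector,lattice_ab_group_add_abs} set \<Rightarrow> 'a topology \<Rightarrow> bool" where
  "locally_solid_on S T \<longleftrightarrow> linear_topology_on S T \<and>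
     (\<forall>U. openin T U \<and> 0 \<in> U \<longrightarrow>
        (\<exists>V W. solid_in S V \<and> openin T W \<and> 0 \<in> W \<and> W \<subseteq> V \<and> V \<subseteq> U))"

definition net_tendsto :: "'b topology \<Rightarrow> 'i set \<Rightarrow> ('i \<Rightarrow> 'i \<Rightarrow> bool) \<Rightarrow> ('i \<Rightarrow> 'b) \<Rightarrow> 'b \<Rightarrow> bool" where
  "net_tendsto T A le xs x \<longleftrightarrow> x \<in> topspace T \<and>
     (\<forall>U. openin T U \<and> x \<in> U \<longrightarrow> (\<exists>a0\<in>A. \<forall>a\<in>A. le a0 a \<longrightarrow> xs a \<in> U))"

definition tvs_cauchy :: "'a::{ordered_real_vector,lattice_ab_group_add_abs} topology \<Rightarrow> (nat \<Rightarrow> 'a) \<Rightarrow> bool" where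
  "tvs_cauchy T s \<longleftrightarrow> (\<forall>U. openin T U \<and> 0 \<in> U \<longrightarrow> (\<exists>N. \<forall>m\<ge>N. \<forall>n\<ge>N. s n - s m \<in> U))"

text \<open>The dominating net is indexed by a directed subset of
  the element type 'a, which is no loss of generality.\<close>
definition order_conv_in :: "'a::{ordered_real_vector,lattice_ab_group_add_abs} set \<Rightarrow>
    'i set \<Rightarrow> ('i \<Rightarrow> 'i \<Rightarrow> bool) \<Rightarrow> ('i \<Rightarrow> 'a) \<Rightarrow> 'a \<Rightarrow> bool" where
  "order_conv_in G A le xs x \<longleftrightarrow>
     (\<exists>(B::'a set) (le'::'a \<Rightarrow> 'a \<Rightarrow> bool) (y::'a \<Rightarrow> 'a).
        directed_set B le' \<and> (\<forall>b\<in>B. y b \<in> G)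
        \<and> (\<forall>b\<in>B. \<forall>b'\<in>B. le' b b' \<longrightarrow> y b' \<le> y b)
        \<and> (\<forall>b\<in>B. 0 \<le> y b)
        \<and> (\<forall>z\<in>G. (\<forall>b\<in>B. z \<le> y b) \<longrightarrow> z \<le> 0)
        \<and> (\<forall>b0\<in>B. \<exists>a0\<in>A. \<forall>a\<in>A. le a0 a \<longrightarrow> \<bar>xs a - x\<bar> \<le> y b0))"

definition uo_conv_in :: "'a::{ordered_real_vector,lattice_ab_group_add_abs} set \<Rightarrow>
    'i set \<Rightarrow> ('i \<Rightarrow> 'i \<Rightarrow> bool) \<Rightarrow> ('i \<Rightarrow> 'a) \<Rightarrow> 'a \<Rightarrow> bool" where
  "uo_conv_in G A le xs x \<longleftrightarrow>
     (\<forall>y\<in>G. order_conv_in G A le (\<lambda>a. inf \<bar>xs a - x\<bar> \<bar>y\<bar>) 0)"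

text \<open>Regular sublattice F of the whole space (nets indexed by directed subsets of 'a).\<close>
definition regular_sublattice :: "'a::{ordered_real_vector,lattice_ab_group_add_abs} set \<Rightarrow> bool" where
  "regular_sublattice F \<longleftrightarrow> vector_sublattice F \<and>
     (\<forall>(A::'a set) le (xs::'a \<Rightarrow> 'a) x. directed_set A le \<and> (\<forall>a\<in>A. xs a \<in> F) \<and> x \<in> F
        \<and> order_conv_in F A le xs x \<longrightarrow> order_conv_in UNIV A le xs x)"

definition ideal_in :: "'a::{ordered_real_vector,lattice_ab_group_add_abs} set \<Rightarrow> bool" where
  "ideal_in I \<longleftrightarrow> 0 \<in> I \<and> (\<forall>x\<in>I. \<forall>y\<in>I. x + y \<in> I) \<and> (\<forall>c. \<forall>x\<in>I. c *\<^sub>R x \<in> I)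
     \<and> solid_in UNIV I"

definition band :: "'a::{ordered_real_vector,lattice_ab_group_add_abs} set \<Rightarrow> bool" where
  "band B \<longleftrightarrow> ideal_in B \<and>
     (\<forall>D s. D \<subseteq> B \<and> (\<forall>d\<in>D. d \<le> s) \<and> (\<forall>u. (\<forall>d\<in>D. d \<le> u) \<longrightarrow> s \<le> u) \<longrightarrow> s \<in> B)"

definition band_gen :: "'a::{ordered_real_vector,lattice_ab_group_add_abs} \<Rightarrow> 'a set" where
  "band_gen x = \<Inter>{B. band B \<and> x \<in> B}"

definition lic_solidly_submetrisable :: "'a::{ordered_real_vector,lattice_ab_group_add_abs} topology \<Rightarrow> bool" where
  "lic_solidly_submetrisable \<tau> \<longleftrightarrow>
     (\<forall>x\<ge>0. \<exists>T. locally_solid_on (band_gen x) T \<and> metrizable_space T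
        \<and> (\<forall>U. openin T U \<longrightarrow> openin (subtopology \<tau> (band_gen x)) U)
        \<and> (\<forall>s. (\<forall>n. s n \<in> {0..x}) \<and> tvs_cauchy T s \<longrightarrow>
               (\<exists>l\<in>{0..x}. net_tendsto T UNIV (\<le>) s l)))"

end

theory Submission
  imports Defs
begin



lemma sup_le_add_nonneg:
  fixes a b :: "'a::{ordered_real_vector,lattice_ab_group_add_abs}"
  assumes "0 \<le> a" "0 \<le> b" shows "sup a b \<le> a + b"
  using assms by (simp add: add_increasing add_increasing2)

lemma inf_add_le:
  fixes a p q :: "'a::{ordered_real_vector,lattice_ab_group_add_abs}"
  assumes "0 \<le> a" "0 \<le> p" "0 \<le> q" shows "inf a (p + q) \<le> inf a p + inf a q"
proof -
  have "inf a p + inf a q = inf (inf (a + a) (a + q)) (inf (p + a) (p + q))"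
    by (simp add: add_inf_distrib_left add_inf_distrib_right inf_assoc inf_commute inf_left_commute)
  moreover have "inf a (p + q) \<le> a + a" using assms by (meson add_increasing2 inf.coboundedI1 order_refl)
  moreover have "inf a (p + q) \<le> a + q" using assms by (simp add: add_increasing2 le_infI1)
  moreover have "inf a (p + q) \<le> p + a" using assms by (simp add: add_increasing le_infI1)
  moreover have "inf a (p + q) \<le> p + q" by simp
  ultimately show ?thesis by simp
qed

lemma scaleR_inf:
  fixes a b :: "'a::{ordered_real_vector,lattice_ab_group_add_abs}"
  assumes "0 \<le> c" shows "c *\<^sub>R inf a b = inf (c *\<^sub>R a) (c *\<^sub>R b)"
proof (cases "c = 0")
  case True then show ?thesis by simp
next
  case False
  have le: "c *\<^sub>R inf a b \<le> inf (c *\<^sub>R a) (c *\<^sub>R b)"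
    using assms by (simp add: scaleR_left_mono)
  have "(1/c) *\<^sub>R inf (c *\<^sub>R a) (c *\<^sub>R b) \<le> inf a b"
  proof -
    have "(1/c) *\<^sub>R inf (c *\<^sub>R a) (c *\<^sub>R b) \<le> (1/c) *\<^sub>R (c *\<^sub>R a)"
      using assms by (intro scaleR_left_mono) auto
    moreover have "(1/c) *\<^sub>R inf (c *\<^sub>R a) (c *\<^sub>R b) \<le> (1/c) *\<^sub>R (c *\<^sub>R b)"
      using assms by (intro scaleR_left_mono) auto
    ultimately show ?thesis using False by simp
  qed
  then have "c *\<^sub>R ((1/c) *\<^sub>R inf (c *\<^sub>R a) (c *\<^sub>R b)) \<le> c *\<^sub>R inf a b"
    using assms by (intro scaleR_left_mono) auto
  then have "inf (c *\<^sub>R a) (c *\<^sub>R b) \<le> c *\<^sub>R inf a b" using False by simp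
  with le show ?thesis by (rule antisym)
qed

lemma abs_inf_diff_le:
  fixes a b c :: "'a::{ordered_real_vector,lattice_ab_group_add_abs}"
  shows "\<bar>inf a c - inf b c\<bar> \<le> \<bar>a - b\<bar>"
proof -
  have k: "\<And>a b. inf a c - inf b c \<le> \<bar>a - b\<bar>"
  proof -
    fix a b :: 'a
    have "a \<le> b + \<bar>a - b\<bar>" by (metis abs_ge_self add.commute diff_le_eq)
    moreover have "c \<le> c + \<bar>a - b\<bar>" by simp
    ultimately have "inf a c \<le> inf (b + \<bar>a - b\<bar>) (c + \<bar>a - b\<bar>)"
      by (meson inf_mono)
    also have "\<dots> = inf b c + \<bar>a - b\<bar>" by (simp add: add_inf_distrib_right)
    finally have "inf a c \<le> inf b c + \<bar>a - b\<bar>" .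
    then show "inf a c - inf b c \<le> \<bar>a - b\<bar>" by (metis add.commute diff_le_eq)
  qed
  have "inf b c - inf a c \<le> \<bar>a - b\<bar>" using k[of b a] by (metis abs_minus_commute)
  then have "- (inf a c - inf b c) \<le> \<bar>a - b\<bar>" by (metis minus_diff_eq)
  then show ?thesis using k[of a b] by (metis abs_leI)
qed

lemma pprt_nprt_disj:
  fixes a :: "'a::{ordered_real_vector,lattice_ab_group_add_abs}"
  shows "inf (sup a 0) (sup (- a) 0) = 0"
proof -
  have "sup a 0 + sup (- a) 0 = sup (sup a 0) (sup (- a) 0) + inf (sup a 0) (sup (- a) 0)"
    by (rule add_eq_inf_sup)
  moreover have "sup (sup a 0) (sup (- a) 0) = \<bar>a\<bar>"
  proof -
    have "sup (sup a 0) (sup (- a) 0) = sup (sup a (- a)) 0"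
      by (simp add: sup_assoc sup_commute sup_left_commute)
    also have "\<dots> = \<bar>a\<bar>" by (metis abs_ge_zero abs_lattice sup.absorb1)
    finally show ?thesis .
  qed
  moreover have "sup a 0 + sup (- a) 0 = \<bar>a\<bar>"
    using abs_prts[of a] by (simp add: pprt_def nprt_def neg_inf_eq_sup)
  ultimately show ?thesis by simp
qed

lemma disj_scale:
  fixes g n :: "'a::{ordered_real_vector,lattice_ab_group_add_abs}"
  assumes "0 \<le> g" "0 \<le> n" "inf g n = 0" "0 \<le> k"
  shows "inf (k *\<^sub>R g) n = 0"
proof (cases "k \<le> 1")
  case True
  have "k *\<^sub>R g \<le> g" using assms True scaleR_right_mono[of k 1 g] by simp
  then have "inf (k *\<^sub>R g) n \<le> 0" using assms by (metis inf_mono order_refl)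
  moreover have "0 \<le> inf (k *\<^sub>R g) n" using assms by (simp add: scaleR_nonneg_nonneg)
  ultimately show ?thesis by simp
next
  case False
  have "n \<le> k *\<^sub>R n" using assms False scaleR_right_mono[of 1 k n] by simp
  then have "inf (k *\<^sub>R g) n \<le> inf (k *\<^sub>R g) (k *\<^sub>R n)" by (meson inf_mono order_refl)
  also have "\<dots> = k *\<^sub>R inf g n" using scaleR_inf[OF assms(4), of g n] by simp
  finally have "inf (k *\<^sub>R g) n \<le> 0" using assms by simp
  moreover have "0 \<le> inf (k *\<^sub>R g) n" using assms by (simp add: scaleR_nonneg_nonneg)
  ultimately show ?thesis by simp
qed



lemma vs_minus: "vector_sublattice F \<Longrightarrow> x \<in> F \<Longrightarrow> - x \<in> F"
  unfolding vector_sublattice_def by (metis scaleR_minus1_left)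
lemma vs_add: "vector_sublattice F \<Longrightarrow> x \<in> F \<Longrightarrow> y \<in> F \<Longrightarrow> x + y \<in> F"
  unfolding vector_sublattice_def by blast
lemma vs_diff: "vector_sublattice F \<Longrightarrow> x \<in> F \<Longrightarrow> y \<in> F \<Longrightarrow> x - y \<in> F"
  by (metis diff_conv_add_uminus vs_add vs_minus)
lemma vs_sup: "vector_sublattice F \<Longrightarrow> x \<in> F \<Longrightarrow> y \<in> F \<Longrightarrow> sup x y \<in> F"
  unfolding vector_sublattice_def by blast
lemma vs_inf: "vector_sublattice F \<Longrightarrow> x \<in> F \<Longrightarrow> y \<in> F \<Longrightarrow> inf x y \<in> F"
  unfolding vector_sublattice_def by blast
lemma vs_scale: "vector_sublattice F \<Longrightarrow> x \<in> F \<Longrightarrow> c *\<^sub>R x \<in> F"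
  unfolding vector_sublattice_def by blast
lemma vs_zero: "vector_sublattice F \<Longrightarrow> 0 \<in> F"
  unfolding vector_sublattice_def by blast
lemma vs_abs: "vector_sublattice F \<Longrightarrow> x \<in> F \<Longrightarrow> \<bar>x\<bar> \<in> F"
  by (simp add: abs_lattice vs_minus vs_sup)

lemma reg_inf:
  fixes P :: "'a::{ordered_real_vector,lattice_ab_group_add_abs} set"
  assumes reg: "regular_sublattice F" and PF: "P \<subseteq> F" and Pne: "P \<noteq> {}"
    and Ppos: "\<forall>p\<in>P. 0 \<le> p"
    and Pdir: "\<forall>p1\<in>P. \<forall>p2\<in>P. \<exists>p3\<in>P. p3 \<le> p1 \<and> p3 \<le> p2"
    and Pinf: "\<forall>g\<in>F. (\<forall>p\<in>P. g \<le> p) \<longrightarrow> g \<le> 0"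
    and e: "\<forall>p\<in>P. e \<le> p"
  shows "e \<le> 0"
proof -
  let ?le = "\<lambda>a b::'a. b \<le> a"
  have dir: "directed_set P ?le"
    unfolding directed_set_def using Pne Pdir by (auto intro: order_trans)
  have oc: "order_conv_in F P ?le (\<lambda>a. a) 0"
    unfolding order_conv_in_def
    apply (rule exI[of _ P], rule exI[of _ ?le], rule exI[of _ "\<lambda>a. a"])
    using dir PF Ppos Pinf by auto
  have F0: "0 \<in> F" using reg vs_zero unfolding regular_sublattice_def by blast
  have RR: "\<forall>(A::'a set) le (xs::'a \<Rightarrow> 'a) x. directed_set A le \<and> (\<forall>a\<in>A. xs a \<in> F) \<and> x \<in> F
        \<and> order_conv_in F A le xs x \<longrightarrow> order_conv_in UNIV A le xs x"
    using reg unfolding regular_sublattice_def by blast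
  have "order_conv_in UNIV P ?le (\<lambda>a. a) 0"
    using RR[rule_format, of P ?le "\<lambda>a. a" 0] dir PF F0 oc by auto
  then obtain B le' y where B: "directed_set (B::'a set) le'"
    and inf: "\<forall>z. (\<forall>b\<in>B. z \<le> y b) \<longrightarrow> z \<le> 0"
    and tl: "\<forall>b0\<in>B. \<exists>a0\<in>P. \<forall>a\<in>P. a \<le> a0 \<longrightarrow> \<bar>a\<bar> \<le> y b0"
    unfolding order_conv_in_def by auto
  have "\<forall>b\<in>B. e \<le> y b"
  proof
    fix b assume "b \<in> B"
    then obtain a0 where "a0 \<in> P" "\<bar>a0\<bar> \<le> y b" using tl by fastforce
    then show "e \<le> y b" using e by (meson abs_ge_self order_trans)
  qed
  then show ?thesis using inf by blast
qed

lemma lemR: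
  fixes W :: "'a::{ordered_real_vector,lattice_ab_group_add_abs} set"
  assumes arch: "archimedean_vl (UNIV :: 'a set)"
    and reg: "regular_sublattice F" and WF: "W \<subseteq> F" and Wne: "W \<noteq> {}"
    and Wdir: "\<forall>w1\<in>W. \<forall>w2\<in>W. \<exists>w3\<in>W. w1 \<le> w3 \<and> w2 \<le> w3"
    and uF: "u \<in> F" and Wu: "\<forall>w\<in>W. w \<le> u" and vF: "v \<in> F"
    and vub: "\<forall>d\<in>F. (\<forall>w\<in>W. w \<le> d) \<longrightarrow> v \<le> d"
    and s: "\<forall>w\<in>W. w \<le> s"
  shows "v \<le> s"
proof -
  have vs: "vector_sublattice F" using reg unfolding regular_sublattice_def by blast
  define P where "P = (\<lambda>w. sup (v - w) 0) ` W"
  have PF: "P \<subseteq> F" unfolding P_def using WF vF vs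
    by (auto intro!: vs_sup vs_diff vs_zero)
  have Pinf: "g \<le> 0" if gF: "g \<in> F" and gl: "\<forall>p\<in>P. g \<le> p" for g
  proof -
    define g' where "g' = sup g 0"
    have g'F: "g' \<in> F" unfolding g'_def using gF vs by (simp add: vs_sup vs_zero)
    have g'0: "0 \<le> g'" unfolding g'_def by simp
    have g'l: "\<forall>w\<in>W. g' \<le> sup (v - w) 0" using gl unfolding P_def g'_def by auto
    define c where "c = u - v"
    have I: "inf g' (k *\<^sub>R g' - c) \<le> 0" if k0: "0 \<le> k" for k :: real
    proof -
      define d where "d = sup (v - g') (u - k *\<^sub>R g')"
      have dF: "d \<in> F" unfolding d_def using vs vF uF g'F
        by (simp add: vs_sup vs_diff vs_scale)
      have "w \<le> d" if wW: "w \<in> W" for w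
      proof -
        define a where "a = v - w"
        define b where "b = u - w"
        have b0: "0 \<le> b" unfolding b_def using Wu wW by simp
        have ga: "g' \<le> sup a 0" using g'l wW unfolding a_def by auto
        have N0: "inf g' (sup (- a) 0) = 0"
        proof -
          have "inf g' (sup (- a) 0) \<le> inf (sup a 0) (sup (- a) 0)"
            using ga by (meson inf_mono order_refl)
          then have "inf g' (sup (- a) 0) \<le> 0" using pprt_nprt_disj[of a] by simp
          moreover have "0 \<le> inf g' (sup (- a) 0)" using g'0 by simp
          ultimately show ?thesis by (simp only:)
        qed
        have N1: "inf (k *\<^sub>R g') (sup (- a) 0) = 0"
          by (rule disj_scale[OF g'0 sup_ge2 N0 k0])
        have "g' - a \<le> sup (- a) 0"
        proof -
          have "g' - a \<le> sup a 0 - a" using ga by (rule diff_right_mono)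
          also have "sup a 0 - a = sup (- a) 0"
            by (simp only: diff_conv_add_uminus add_sup_distrib_right) (simp add: sup_commute)
          finally show ?thesis .
        qed
        moreover have "k *\<^sub>R g' - b \<le> k *\<^sub>R g'" using b0 by (simp only: diff_le_eq le_add_same_cancel1)
        ultimately have "inf (g' - a) (k *\<^sub>R g' - b) \<le> inf (sup (- a) 0) (k *\<^sub>R g')"
          by (meson inf_mono)
        also have "\<dots> = 0" using N1 by (simp only: inf_commute)
        finally have "inf (g' - a) (k *\<^sub>R g' - b) \<le> 0" .
        moreover have "sup (a - g') (b - k *\<^sub>R g') = - inf (g' - a) (k *\<^sub>R g' - b)"
          by (simp only: neg_inf_eq_sup minus_diff_eq)
        ultimately have "0 \<le> sup (a - g') (b - k *\<^sub>R g')" by (metis neg_0_le_iff_le)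
        also have "sup (a - g') (b - k *\<^sub>R g') = d - w"
        proof -
          have "d - w = sup ((v - g') - w) ((u - k *\<^sub>R g') - w)"
            unfolding d_def by (metis diff_conv_add_uminus add_sup_distrib_right)
          moreover have "a - g' = (v - g') - w" "b - k *\<^sub>R g' = (u - k *\<^sub>R g') - w"
            unfolding a_def b_def by (simp_all add: algebra_simps)
          ultimately show ?thesis by (simp only:)
        qed
        finally show "w \<le> d" by simp
      qed
      then have "v \<le> d" using vub dF by blast
      then have "0 \<le> d - v" by simp
      also have "d - v = sup (- g') (c - k *\<^sub>R g')"
      proof -
        have "d - v = sup ((v - g') - v) ((u - k *\<^sub>R g') - v)"
          unfolding d_def by (metis diff_conv_add_uminus add_sup_distrib_right)
        moreover have "(v - g') - v = - g'" "(u - k *\<^sub>R g') - v = c - k *\<^sub>R g'"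
          unfolding c_def by (simp_all add: algebra_simps)
        ultimately show ?thesis by (simp only:)
      qed
      finally have "0 \<le> sup (- g') (c - k *\<^sub>R g')" .
      moreover have "inf g' (k *\<^sub>R g' - c) = - sup (- g') (c - k *\<^sub>R g')"
        by (simp only: neg_sup_eq_inf minus_diff_eq minus_minus)
      ultimately show ?thesis by (metis neg_le_0_iff_le)
    qed
    have step: "real (Suc k) *\<^sub>R g' - c \<le> sup g' (real k *\<^sub>R g' - c)" for k
    proof -
      have "g' + (real k *\<^sub>R g' - c) = sup g' (real k *\<^sub>R g' - c) + inf g' (real k *\<^sub>R g' - c)"
        by (rule add_eq_inf_sup)
      also have "\<dots> \<le> sup g' (real k *\<^sub>R g' - c)" using I[of "real k"] by simp
      moreover have "real (Suc k) *\<^sub>R g' - c = g' + (real k *\<^sub>R g' - c)"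
        by (simp only: of_nat_Suc scaleR_add_left scaleR_one add_diff_eq)
      ultimately show ?thesis by simp
    qed
    have bnd: "real k *\<^sub>R g' - c \<le> sup g' (- c)" for k
    proof (induction k)
      case 0 then show ?case by simp
    next
      case (Suc k)
      have "real (Suc k) *\<^sub>R g' - c \<le> sup g' (real k *\<^sub>R g' - c)" by (rule step)
      also have "\<dots> \<le> sup g' (sup g' (- c))" using Suc by (meson sup_mono order_refl)
      finally show ?case by (simp add: sup_absorb2)
    qed
    have "real k *\<^sub>R g' \<le> g' + sup (- c) 0 + c" for k
    proof -
      have "sup g' (- c) \<le> g' + sup (- c) 0" using g'0
        by (simp add: add_increasing)
      then have "real k *\<^sub>R g' - c \<le> g' + sup (- c) 0" using bnd[of k] by (meson order_trans)
      then show ?thesis by (simp only: diff_le_eq)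
    qed
    then have "g' \<le> 0" using arch unfolding archimedean_vl_def by blast
    then show "g \<le> 0" unfolding g'_def by simp
  qed
  have Pne: "P \<noteq> {}" using Wne unfolding P_def by simp
  have Ppos: "\<forall>p\<in>P. 0 \<le> p" unfolding P_def by simp
  have Pdir: "\<forall>p1\<in>P. \<forall>p2\<in>P. \<exists>p3\<in>P. p3 \<le> p1 \<and> p3 \<le> p2"
  proof (intro ballI)
    fix p1 p2 assume "p1 \<in> P" "p2 \<in> P"
    then obtain w1 w2 where w: "w1 \<in> W" "w2 \<in> W" "p1 = sup (v - w1) 0" "p2 = sup (v - w2) 0"
      unfolding P_def by auto
    then obtain w3 where "w3 \<in> W" "w1 \<le> w3" "w2 \<le> w3" using Wdir by blast
    then show "\<exists>p3\<in>P. p3 \<le> p1 \<and> p3 \<le> p2" unfolding P_def using w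
      by (intro bexI[of _ "sup (v - w3) 0"]) (auto intro!: le_supI intro: le_supI1 diff_left_mono)
  qed
  have e: "\<forall>p\<in>P. sup (v - s) 0 \<le> p" unfolding P_def using s
    by (auto intro!: le_supI intro: le_supI1 diff_left_mono)
  have "sup (v - s) 0 \<le> 0" using reg_inf[OF reg PF Pne Ppos Pdir _ e] Pinf by blast
  then show ?thesis by simp
qed



definition useq :: "'a::{ordered_real_vector,lattice_ab_group_add_abs} topology \<Rightarrow> 'a set \<Rightarrow> (nat \<Rightarrow> 'a set) \<Rightarrow> bool" where
  "useq T S U \<longleftrightarrow> (\<forall>j. solid_in S (U j)) \<and> (\<forall>j. \<exists>W. openin T W \<and> 0 \<in> W \<and> W \<subseteq> U j)
     \<and> (\<forall>j. \<forall>a\<in>U (Suc j). \<forall>b\<in>U (Suc j). a + b \<in> U j)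
     \<and> (\<forall>Q. openin T Q \<and> 0 \<in> Q \<longrightarrow> (\<exists>j. U j \<subseteq> Q))"

lemma useq_solidin: "useq T S U \<Longrightarrow> solid_in S (U j)"
  unfolding useq_def by simp
lemma useq_W: "useq T S U \<Longrightarrow> \<exists>W. openin T W \<and> 0 \<in> W \<and> W \<subseteq> U j"
  unfolding useq_def by simp
lemma useq_small: "useq T S U \<Longrightarrow> openin T Q \<Longrightarrow> 0 \<in> Q \<Longrightarrow> \<exists>j. U j \<subseteq> Q"
  unfolding useq_def by simp

lemma useq_0: "useq T S U \<Longrightarrow> 0 \<in> U j"
  using useq_W[of T S U j] by blast

lemma useq_add: "useq T S U \<Longrightarrow> a \<in> U (Suc j) \<Longrightarrow> b \<in> U (Suc j) \<Longrightarrow> a + b \<in> U j"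
  unfolding useq_def by simp

lemma useq_Suc: assumes "useq T S U" shows "U (Suc j) \<subseteq> U j"
proof
  fix a assume "a \<in> U (Suc j)"
  then have "a + 0 \<in> U j" by (rule useq_add[OF assms _ useq_0[OF assms]])
  then show "a \<in> U j" by simp
qed

lemma useq_anti: assumes "useq T S U" "i \<le> j" shows "U j \<subseteq> U i"
  using assms(2)
proof (induction j rule: dec_induct)
  case base show ?case by simp
next
  case (step k) then show ?case using useq_Suc[OF assms(1), of k] by blast
qed

lemma useq_sub: "useq T S U \<Longrightarrow> U j \<subseteq> S"
  using useq_solidin[of T S U j] unfolding solid_in_def by blast

lemma useq_solid: "useq T S U \<Longrightarrow> a \<in> U j \<Longrightarrow> b \<in> S \<Longrightarrow> \<bar>b\<bar> \<le> \<bar>a\<bar> \<Longrightarrow> b \<in> U j"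
  using useq_solidin[of T S U j] unfolding solid_in_def by blast

lemma useq_zero:
  assumes "useq T S U" "Hausdorff_space T" "topspace T = S" "p \<in> S" "\<forall>j. p \<in> U j"
  shows "p = 0"
proof (rule ccontr)
  assume "p \<noteq> 0"
  have "0 \<in> S" using useq_0[OF assms(1)] useq_sub[OF assms(1)] by blast
  then obtain Q1 Q2 where "openin T Q1" "openin T Q2" "0 \<in> Q1" "p \<in> Q2" "disjnt Q1 Q2"
  proof -
    have "\<forall>x\<in>topspace T. \<forall>y\<in>topspace T. x \<noteq> y \<longrightarrow> (\<exists>U V. openin T U \<and> openin T V \<and> x \<in> U \<and> y \<in> V \<and> disjnt U V)"
      using assms(2) unfolding Hausdorff_space_def by blast
    then have "\<exists>U V. openin T U \<and> openin T V \<and> 0 \<in> U \<and> p \<in> V \<and> disjnt U V"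
      using assms(3,4) \<open>0 \<in> S\<close> \<open>p \<noteq> 0\<close> by (metis (no_types))
    then show ?thesis using that by blast
  qed
  then obtain j where "U j \<subseteq> Q1" using useq_small[OF assms(1)] by blast
  then show False using assms(5) \<open>p \<in> Q2\<close> \<open>disjnt Q1 Q2\<close> by (auto simp: disjnt_def)
qed

lemma trans_open:
  assumes lt: "linear_topology_on S T" and l: "- l \<in> S" and Q: "openin T Q"
  shows "openin T {a \<in> S. a - l \<in> Q}"
proof -
  have ct: "topspace T = S" and ca: "continuous_map (prod_topology T T) T (\<lambda>(x,y). x + y)"
    using lt unfolding linear_topology_on_def by auto
  have "continuous_map T (prod_topology T T) (\<lambda>a. (a, - l))"
    using l ct by (intro continuous_map_pairedI) (auto simp: continuous_map_const)
  then have "continuous_map T T ((\<lambda>(x,y). x + y) \<circ> (\<lambda>a. (a, - l)))"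
    using ca by (rule continuous_map_compose)
  then have "openin T {a \<in> topspace T. ((\<lambda>(x,y). x + y) \<circ> (\<lambda>a. (a, - l))) a \<in> Q}"
    using Q by (rule openin_continuous_map_preimage)
  then show ?thesis using ct by simp
qed

lemma useq_tend:
  assumes uq: "useq T S U" and lt: "linear_topology_on S T" and l: "- l \<in> S"
    and tn: "net_tendsto T UNIV (\<le>) (s :: nat \<Rightarrow> 'a::{ordered_real_vector,lattice_ab_group_add_abs}) l"
  shows "\<exists>N. \<forall>m\<ge>N. s m - l \<in> U j"
proof -
  obtain W where W: "openin T W" "0 \<in> W" "W \<subseteq> U j" using useq_W[OF uq] by blast
  have lS: "l \<in> S" using tn lt unfolding net_tendsto_def linear_topology_on_def by auto
  have "openin T {a \<in> S. a - l \<in> W}" using trans_open[OF lt l W(1)] .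
  moreover have "l \<in> {a \<in> S. a - l \<in> W}" using lS W by simp
  moreover have H: "\<forall>U. openin T U \<and> l \<in> U \<longrightarrow> (\<exists>a0\<in>UNIV. \<forall>a\<in>UNIV. a0 \<le> a \<longrightarrow> s a \<in> U)"
    using tn unfolding net_tendsto_def by simp
  ultimately have "\<exists>a0\<in>UNIV. \<forall>a\<in>UNIV. a0 \<le> a \<longrightarrow> s a \<in> {a \<in> S. a - l \<in> W}"
    by (metis (no_types, lifting))
  then obtain N where "\<forall>m. N \<le> m \<longrightarrow> s m \<in> {a \<in> S. a - l \<in> W}" by auto
  then show ?thesis using W by blast
qed


primrec smax :: "(nat \<Rightarrow> 'a::{ordered_real_vector,lattice_ab_group_add_abs}) \<Rightarrow> nat \<Rightarrow> nat \<Rightarrow> 'a" where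
  "smax v n 0 = v n"
| "smax v n (Suc m) = sup (smax v n m) (v (n + Suc m))"

lemma smax_bounds:
  assumes "\<forall>k. 0 \<le> v k \<and> v k \<le> u"
  shows "0 \<le> smax v n m \<and> smax v n m \<le> u"
  using assms by (induction m) (auto intro: le_supI1)

lemma smax_nonneg: "\<forall>k. 0 \<le> v k \<Longrightarrow> 0 \<le> smax v n m"
  by (induction m) (auto intro: le_supI1)

lemma smax_ge: "i \<le> m \<Longrightarrow> v (n + i) \<le> smax v n m"
proof (induction m)
  case 0 then show ?case by simp
next
  case (Suc m)
  then show ?case by (cases "i = Suc m") (auto intro: le_supI1)
qed

lemma smax_le_sum:
  assumes "\<forall>k. 0 \<le> v k"
  shows "smax v n m \<le> (\<Sum>i<Suc m. v (n + i))"
proof (induction m)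
  case 0 then show ?case by simp
next
  case (Suc m)
  have s0: "0 \<le> smax v n m" using assms by (rule smax_nonneg)
  have "smax v n (Suc m) \<le> smax v n m + v (n + Suc m)"
    using s0 assms by (simp add: sup_le_add_nonneg)
  also have "\<dots> \<le> (\<Sum>i<Suc m. v (n + i)) + v (n + Suc m)" using Suc by (rule add_right_mono)
  also have "\<dots> = (\<Sum>i<Suc (Suc m). v (n + i))" by simp
  finally show ?case .
qed

lemma smax_diff:
  assumes "\<forall>k. 0 \<le> v k"
  shows "smax v n (m + d) - smax v n m \<le> (\<Sum>i<d. v (n + m + 1 + i))"
proof (induction d)
  case 0 then show ?case by simp
next
  case (Suc d)
  have s0: "0 \<le> smax v n (m + d)" using assms by (rule smax_nonneg)
  have "smax v n (m + Suc d) \<le> smax v n (m + d) + v (n + m + 1 + d)"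
    using s0 assms sup_le_add_nonneg[of "smax v n (m + d)" "v (n + Suc (m + d))"] by (simp add: add.assoc)
  then have "smax v n (m + Suc d) - smax v n m \<le> (smax v n (m + d) - smax v n m) + v (n + m + 1 + d)"
    by (simp add: algebra_simps)
  also have "\<dots> \<le> (\<Sum>i<d. v (n + m + 1 + i)) + v (n + m + 1 + d)" using Suc by (rule add_right_mono)
  also have "\<dots> = (\<Sum>i<Suc d. v (n + m + 1 + i))" by simp
  finally show ?case .
qed

lemma smax_mono: "m \<le> m' \<Longrightarrow> smax v n m \<le> smax v n m'"
proof (induction m' rule: dec_induct)
  case base then show ?case by simp
next
  case (step k) then show ?case by (auto intro: le_supI1)
qed

lemma sum_in_U:
  assumes uq: "useq T S U" and vU: "\<forall>k. v k \<in> U (Suc k)"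
  shows "(\<Sum>i<m. v (k + i)) \<in> U k"
proof (induction m arbitrary: k)
  case 0 then show ?case using useq_0[OF uq] by simp
next
  case (Suc m)
  have "(\<Sum>i<Suc m. v (k + i)) = v k + (\<Sum>i<m. v (Suc k + i))"
    by (subst sum.lessThan_Suc_shift) simp
  moreover have "v k \<in> U (Suc k)" using vU by simp
  moreover have "(\<Sum>i<m. v (Suc k + i)) \<in> U (Suc k)" by (rule Suc.IH)
  ultimately show ?case using useq_add[OF uq] by simp
qed


lemma lemL:
  fixes T :: "'a::{ordered_real_vector,lattice_ab_group_add_abs} topology"
  assumes lt: "linear_topology_on S T" and uq: "useq T S U"
    and Sdiff: "\<forall>a\<in>S. \<forall>b\<in>S. a - b \<in> S" and Ssol: "\<forall>a b. b \<in> S \<longrightarrow> \<bar>a\<bar> \<le> \<bar>b\<bar> \<longrightarrow> a \<in> S"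
    and uS: "u \<in> S" and u0: "0 \<le> u"
    and compl: "\<forall>s. (\<forall>n. s n \<in> {0..u}) \<and> tvs_cauchy T s \<longrightarrow> (\<exists>l\<in>{0..u}. net_tendsto T UNIV (\<le>) s l)"
    and vb: "\<forall>k. 0 \<le> v k \<and> v k \<le> u" and vU: "\<forall>k. v k \<in> U (Suc k)"
  shows "\<exists>z. (\<forall>n k. n \<le> k \<longrightarrow> v k \<le> z n) \<and> (\<forall>h. (\<forall>n. h \<le> z n) \<longrightarrow> h \<le> 0)"
proof -
  have ts: "topspace T = S" and hd: "Hausdorff_space T"
    using lt unfolding linear_topology_on_def by auto
  have inS: "a \<in> S" if "\<bar>a\<bar> \<le> u" for a using Ssol uS u0 that by auto
  have S0: "0 \<in> S" using inS u0 by simp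
  have Sneg: "- a \<in> S" if "a \<in> S" for a using Sdiff S0 that by (metis diff_0)
  have v0: "\<forall>k. 0 \<le> v k" using vb by blast
  have smS: "smax v n m \<in> S" for n m
    using smax_bounds[OF vb, of n m] by (intro inS) simp
  have smU: "smax v n m \<in> U n" for n m
  proof -
    have "(\<Sum>i<Suc m. v (n + i)) \<in> U n" by (rule sum_in_U[OF uq vU])
    moreover have "\<bar>smax v n m\<bar> \<le> \<bar>\<Sum>i<Suc m. v (n + i)\<bar>"
      using smax_le_sum[OF v0, of n m] smax_nonneg[OF v0, of n m]
      by (metis abs_ge_self abs_of_nonneg order_trans)
    ultimately show ?thesis using useq_solid[OF uq] smS by blast
  qed
  have dU: "smax v n (m + d) - smax v n m \<in> U (n + m + 1)" for n m d
  proof -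
    have "(\<Sum>i<d. v (n + m + 1 + i)) \<in> U (n + m + 1)" by (rule sum_in_U[OF uq vU])
    moreover have "0 \<le> smax v n (m + d) - smax v n m" using smax_mono[of m "m + d" v n] by simp
    then have "\<bar>smax v n (m + d) - smax v n m\<bar> \<le> \<bar>\<Sum>i<d. v (n + m + 1 + i)\<bar>"
      using smax_diff[OF v0, of n m d] by (metis abs_ge_self abs_of_nonneg order_trans)
    moreover have "smax v n (m + d) - smax v n m \<in> S" using Sdiff smS by blast
    ultimately show ?thesis using useq_solid[OF uq] by blast
  qed
  have cauchy: "tvs_cauchy T (smax v n)" for n
    unfolding tvs_cauchy_def
  proof (intro allI impI)
    fix Q assume Q: "openin T Q \<and> 0 \<in> Q"
    then obtain j where j: "U j \<subseteq> Q" using useq_small[OF uq] by blast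
    have "smax v n q - smax v n p \<in> Q" if "j \<le> p" "j \<le> q" for p q
    proof (cases "p \<le> q")
      case True
      have "smax v n (p + (q - p)) - smax v n p \<in> U (n + p + 1)" by (rule dU)
      moreover have "U (n + p + 1) \<subseteq> U j" using useq_anti[OF uq] that by simp
      ultimately show ?thesis using True j by auto
    next
      case False
      have "smax v n (q + (p - q)) - smax v n q \<in> U (n + q + 1)" by (rule dU)
      moreover have "U (n + q + 1) \<subseteq> U j" using useq_anti[OF uq] that by simp
      ultimately have e: "smax v n p - smax v n q \<in> U j" using False by auto
      have "smax v n q - smax v n p \<in> S" using Sdiff smS by blast
      moreover have "\<bar>smax v n q - smax v n p\<bar> \<le> \<bar>smax v n p - smax v n q\<bar>"
        by (simp add: abs_minus_commute)
      ultimately have "smax v n q - smax v n p \<in> U j" using useq_solid[OF uq e] by blast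
      then show ?thesis using j by auto
    qed
    then show "\<exists>N. \<forall>m\<ge>N. \<forall>n'\<ge>N. smax v n n' - smax v n m \<in> Q" by blast
  qed
  have "\<forall>n. \<exists>l. l \<in> {0..u} \<and> net_tendsto T UNIV (\<le>) (smax v n) l"
  proof
    fix n
    have "\<forall>m. smax v n m \<in> {0..u}" using smax_bounds[OF vb] by simp
    then show "\<exists>l. l \<in> {0..u} \<and> net_tendsto T UNIV (\<le>) (smax v n) l"
      using compl cauchy[of n] by blast
  qed
  then obtain z where z: "\<forall>n. z n \<in> {0..u} \<and> net_tendsto T UNIV (\<le>) (smax v n) (z n)"
    by metis
  have zS: "z n \<in> S" for n using z by (intro inS) auto
  have tend: "\<exists>N. \<forall>m\<ge>N. smax v n m - z n \<in> U j" for n j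
    using useq_tend[OF uq lt Sneg[OF zS[of n]]] z by blast
  have G1: "v k \<le> z n" if nk: "n \<le> k" for n k
  proof -
    define D where "D = inf (z n - v k) 0"
    have vS: "v k \<in> S" using vb by (intro inS) simp
    have "\<bar>D\<bar> \<le> \<bar>z n - v k\<bar>" unfolding D_def using abs_inf_diff_le[of "z n - v k" 0 0] by simp
    moreover have "z n - v k \<in> S" using Sdiff zS vS by blast
    ultimately have DS: "D \<in> S" using Ssol by blast
    have "D \<in> U j" for j
    proof -
      obtain N where N: "\<forall>m\<ge>N. smax v n m - z n \<in> U j" using tend by blast
      define m where "m = max N (k - n)"
      have e: "smax v n m - z n \<in> U j" using N unfolding m_def by simp
      have "v (n + (k - n)) \<le> smax v n m" unfolding m_def by (rule smax_ge) simp
      then have "v k \<le> smax v n m" using nk by simp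
      then have i0: "inf (smax v n m - v k) 0 = 0" by (simp add: inf_absorb2)
      have "\<bar>D\<bar> = \<bar>inf (z n - v k) 0 - inf (smax v n m - v k) 0\<bar>" unfolding D_def i0 by simp
      also have "\<dots> \<le> \<bar>(z n - v k) - (smax v n m - v k)\<bar>" by (rule abs_inf_diff_le)
      also have "\<dots> = \<bar>smax v n m - z n\<bar>" by (simp add: abs_minus_commute)
      finally show ?thesis using useq_solid[OF uq e DS] by blast
    qed
    then have "D = 0" using useq_zero[OF uq hd ts DS] by blast
    then have "0 \<le> z n - v k" unfolding D_def by (metis inf.cobounded1)
    then show ?thesis by simp
  qed
  have G2: "z (Suc k) \<in> U k" for k
  proof -
    obtain N where N: "\<forall>m\<ge>N. smax v (Suc k) m - z (Suc k) \<in> U (Suc k)" using tend by blast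
    then have e: "smax v (Suc k) N - z (Suc k) \<in> U (Suc k)" by simp
    have "z (Suc k) - smax v (Suc k) N \<in> S" using Sdiff zS smS by blast
    then have e': "z (Suc k) - smax v (Suc k) N \<in> U (Suc k)"
      using useq_solid[OF uq e] by (simp add: abs_minus_commute)
    have "smax v (Suc k) N + (z (Suc k) - smax v (Suc k) N) \<in> U k"
      using useq_add[OF uq smU e'] .
    then show ?thesis by simp
  qed
  have G3: "h \<le> 0" if hz: "\<forall>n. h \<le> z n" for h
  proof -
    define h' where "h' = sup h 0"
    have h'0: "0 \<le> h'" unfolding h'_def by simp
    have h'z: "h' \<le> z n" for n unfolding h'_def using hz z by auto
    have "z 0 \<le> u" using z by simp
    then have h'S: "h' \<in> S" using h'0 h'z[of 0] by (intro inS) simp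
    have "h' \<in> U k" for k
      using useq_solid[OF uq G2[of k] h'S] h'0 h'z[of "Suc k"] z by auto
    then have "h' = 0" using useq_zero[OF uq hd ts h'S] by blast
    then show ?thesis unfolding h'_def by (metis sup.cobounded1)
  qed
  show ?thesis using G1 G3 by blast
qed



lemma half_ex:
  fixes T :: "'a::{ordered_real_vector,lattice_ab_group_add_abs} topology"
  assumes lt: "linear_topology_on S T" and Q: "openin T Q" "0 \<in> Q"
  shows "\<exists>W. openin T W \<and> 0 \<in> W \<and> (\<forall>a\<in>W. \<forall>b\<in>W. a + b \<in> Q)"
proof -
  have ca: "continuous_map (prod_topology T T) T (\<lambda>(x,y). x + y)"
    using lt unfolding linear_topology_on_def by auto
  have op: "openin (prod_topology T T) {p \<in> topspace (prod_topology T T). (\<lambda>(x,y). x + y) p \<in> Q}"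
    by (rule openin_continuous_map_preimage[OF ca Q(1)])
  have "0 \<in> topspace T" using Q openin_subset by blast
  then have "(0, 0) \<in> topspace (prod_topology T T)" by (simp only: topspace_prod_topology mem_Times_iff fst_conv snd_conv)
  moreover have "(\<lambda>(x,y). x + y) (0::'a, 0::'a) \<in> Q" using Q(2) by simp
  ultimately have "(0, 0) \<in> {p \<in> topspace (prod_topology T T). (\<lambda>(x,y). x + y) p \<in> Q}"
    by blast
  moreover have "\<forall>x y. (x,y) \<in> {p \<in> topspace (prod_topology T T). (\<lambda>(x,y). x + y) p \<in> Q} \<longrightarrow>
      (\<exists>U V. openin T U \<and> openin T V \<and> x \<in> U \<and> y \<in> V \<and> U \<times> V \<subseteq> {p \<in> topspace (prod_topology T T). (\<lambda>(x,y). x + y) p \<in> Q})"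
    using op by (simp only: openin_prod_topology_alt)
  ultimately have "\<exists>U V. openin T U \<and> openin T V \<and> 0 \<in> U \<and> 0 \<in> V \<and> U \<times> V \<subseteq> {p \<in> topspace (prod_topology T T). (\<lambda>(x,y). x + y) p \<in> Q}"
    by (elim allE impE) 
  then obtain U V where UV: "openin T U" "openin T V" "0 \<in> U" "0 \<in> V"
    "U \<times> V \<subseteq> {p \<in> topspace (prod_topology T T). (\<lambda>(x,y). x + y) p \<in> Q}"
    by (elim exE conjE)
  show ?thesis
  proof (intro exI conjI ballI)
    show "openin T (U \<inter> V)" using UV(1,2) by (rule openin_Int)
    show "0 \<in> U \<inter> V" using UV by blast
    fix a b assume "a \<in> U \<inter> V" "b \<in> U \<inter> V"
    then have "(a, b) \<in> U \<times> V" by blast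
    with UV(5) have "(a, b) \<in> {p \<in> topspace (prod_topology T T). (\<lambda>(x,y). x + y) p \<in> Q}"
      by (rule subsetD)
    then show "a + b \<in> Q" by simp
  qed
qed

primrec vwseq :: "('a set \<Rightarrow> 'a set \<times> 'a set) \<Rightarrow> ('a set \<Rightarrow> 'a set) \<Rightarrow> (nat \<Rightarrow> 'a set) \<Rightarrow> nat \<Rightarrow> 'a set \<times> 'a set" where
  "vwseq pk hf b 0 = pk (b 0)"
| "vwseq pk hf b (Suc j) = pk (b (Suc j) \<inter> hf (snd (vwseq pk hf b j)))"

lemma useq_ex:
  fixes T :: "'a::{ordered_real_vector,lattice_ab_group_add_abs} topology"
  assumes ls: "locally_solid_on S T" and fc: "first_countable T" and S0: "0 \<in> S"
  shows "\<exists>U. useq T S U"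
proof -
  have lt: "linear_topology_on S T" using ls unfolding locally_solid_on_def by blast
  have ts: "topspace T = S" using lt unfolding linear_topology_on_def by blast
  have lsp: "\<exists>V W. solid_in S V \<and> openin T W \<and> 0 \<in> W \<and> W \<subseteq> V \<and> V \<subseteq> Q"
    if "openin T Q" "0 \<in> Q" for Q using ls that unfolding locally_solid_on_def by blast
  obtain B where B: "countable B" "\<forall>V\<in>B. openin T V"
    "\<forall>U. openin T U \<and> 0 \<in> U \<longrightarrow> (\<exists>V\<in>B. 0 \<in> V \<and> V \<subseteq> U)"
    using fc S0 ts unfolding first_countable_def by metis
  define B' where "B' = {V\<in>B. 0 \<in> V}"
  have B'c: "countable B'" using B(1) unfolding B'_def by simp
  have "\<exists>V\<in>B. 0 \<in> V \<and> V \<subseteq> S" using B(3) S0 ts by (metis openin_topspace)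
  then have B'ne: "B' \<noteq> {}" unfolding B'_def by blast
  define b where "b = from_nat_into B'"
  have bB: "b j \<in> B'" for j unfolding b_def using B'ne by (rule from_nat_into)
  have bop: "openin T (b j) \<and> 0 \<in> b j" for j using bB[of j] B(2) unfolding B'_def by blast
  have bsurj: "\<exists>j. b j = V" if "V \<in> B'" for V
    unfolding b_def using from_nat_into_surj[OF B'c that] by blast
  define P where "P = (\<lambda>Q (p :: 'a set \<times> 'a set). solid_in S (fst p) \<and> openin T (snd p) \<and> 0 \<in> snd p
      \<and> snd p \<subseteq> fst p \<and> fst p \<subseteq> Q)"
  define pk where "pk = (\<lambda>Q. SOME p. P Q p)"
  have pk: "P Q (pk Q)" if q: "openin T Q" "0 \<in> Q" for Q
  proof -
    obtain V W where "solid_in S V \<and> openin T W \<and> 0 \<in> W \<and> W \<subseteq> V \<and> V \<subseteq> Q"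
      using lsp[OF q] by blast
    then have "P Q (V, W)" unfolding P_def by simp
    then show ?thesis unfolding pk_def by (rule someI)
  qed
  define hf where "hf = (\<lambda>Q. SOME W. openin T W \<and> 0 \<in> W \<and> (\<forall>a\<in>W. \<forall>b\<in>W. a + b \<in> Q))"
  have hf: "openin T (hf Q) \<and> 0 \<in> hf Q \<and> (\<forall>a\<in>hf Q. \<forall>b\<in>hf Q. a + b \<in> Q)"
    if "openin T Q" "0 \<in> Q" for Q
    unfolding hf_def using half_ex[OF lt that] by (rule someI_ex)
  define VW where "VW = vwseq pk hf b"
  have inv: "P (b j) (VW j) \<and> (\<forall>i. j = Suc i \<longrightarrow> fst (VW j) \<subseteq> hf (snd (VW i)))" for j
  proof (induction j)
    case 0
    show ?case unfolding VW_def using pk bop by simp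
  next
    case (Suc j)
    then have o: "openin T (snd (VW j)) \<and> 0 \<in> snd (VW j)" unfolding P_def by simp
    then have "openin T (b (Suc j) \<inter> hf (snd (VW j))) \<and> 0 \<in> b (Suc j) \<inter> hf (snd (VW j))"
      using hf[of "snd (VW j)"] bop[of "Suc j"] by blast
    then have "P (b (Suc j) \<inter> hf (snd (VW j))) (VW (Suc j))"
      unfolding VW_def using pk by simp
    then show ?case unfolding P_def by auto
  qed
  define U where "U = (\<lambda>j. fst (VW j))"
  have "useq T S U" unfolding useq_def
  proof (intro conjI allI impI ballI)
    fix j
    show "solid_in S (U j)" using inv[of j] unfolding U_def P_def by simp
    show "\<exists>W. openin T W \<and> 0 \<in> W \<and> W \<subseteq> U j"
      using inv[of j] unfolding U_def P_def by blast
  next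
    fix j a c assume a: "a \<in> U (Suc j)" and c: "c \<in> U (Suc j)"
    have o: "openin T (snd (VW j)) \<and> 0 \<in> snd (VW j)" using inv[of j] unfolding P_def by simp
    have "a \<in> hf (snd (VW j))" "c \<in> hf (snd (VW j))" using inv[of "Suc j"] a c unfolding U_def by auto
    then have "a + c \<in> snd (VW j)" using hf[of "snd (VW j)"] o by blast
    then show "a + c \<in> U j" using inv[of j] unfolding U_def P_def by blast
  next
    fix Q assume "openin T Q \<and> 0 \<in> Q"
    then obtain V where "V \<in> B" "0 \<in> V" "V \<subseteq> Q" using B(3) by blast
    then obtain j where "b j = V" using bsurj unfolding B'_def by blast
    then have "U j \<subseteq> Q" using inv[of j] \<open>V \<subseteq> Q\<close> unfolding U_def P_def by blast
    then show "\<exists>j. U j \<subseteq> Q" by blast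
  qed
  then show ?thesis by blast
qed



lemma bg_mem: "y \<in> band_gen x \<longleftrightarrow> (\<forall>B. band B \<and> x \<in> B \<longrightarrow> y \<in> B)"
  unfolding band_gen_def by blast

lemma bg_self: "x \<in> band_gen x" unfolding bg_mem by blast

lemma bg_solid:
  fixes y z :: "'a::{ordered_real_vector,lattice_ab_group_add_abs}"
  assumes "y \<in> band_gen x" "\<bar>z\<bar> \<le> \<bar>y\<bar>" shows "z \<in> band_gen x"
  unfolding bg_mem
proof (intro allI impI)
  fix B assume B: "band B \<and> x \<in> B"
  then have "y \<in> B" using assms(1) unfolding bg_mem by blast
  moreover have "solid_in UNIV B" using B unfolding band_def ideal_in_def by simp
  ultimately show "z \<in> B" using assms(2) unfolding solid_in_def by blast
qed

lemma bg_add: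
  fixes a b :: "'a::{ordered_real_vector,lattice_ab_group_add_abs}"
  assumes "a \<in> band_gen x" "b \<in> band_gen x" shows "a + b \<in> band_gen x"
  unfolding bg_mem
proof (intro allI impI)
  fix B assume B: "band B \<and> x \<in> B"
  then have "a \<in> B" "b \<in> B" using assms unfolding bg_mem by blast+
  moreover have "\<forall>x\<in>B. \<forall>y\<in>B. x + y \<in> B" using B unfolding band_def ideal_in_def by simp
  ultimately show "a + b \<in> B" by blast
qed

lemma bg_scale:
  fixes a :: "'a::{ordered_real_vector,lattice_ab_group_add_abs}"
  assumes "a \<in> band_gen x" shows "c *\<^sub>R a \<in> band_gen x"
  unfolding bg_mem
proof (intro allI impI)
  fix B assume B: "band B \<and> x \<in> B"
  then have "a \<in> B" using assms unfolding bg_mem by blast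
  moreover have "\<forall>c. \<forall>x\<in>B. c *\<^sub>R x \<in> B" using B unfolding band_def ideal_in_def by simp
  ultimately show "c *\<^sub>R a \<in> B" by blast
qed

lemma bg_diff:
  fixes a b :: "'a::{ordered_real_vector,lattice_ab_group_add_abs}"
  assumes "a \<in> band_gen x" "b \<in> band_gen x" shows "a - b \<in> band_gen x"
proof -
  have "(-1) *\<^sub>R b \<in> band_gen x" using assms(2) by (rule bg_scale)
  then have "a + (-1) *\<^sub>R b \<in> band_gen x" using assms(1) bg_add by blast
  then show ?thesis by simp
qed

definition Tt :: "'a::{ordered_real_vector,lattice_ab_group_add_abs} topology \<Rightarrow> 'a \<Rightarrow> 'a topology" where
  "Tt \<tau> u = (SOME T. locally_solid_on (band_gen u) T \<and> metrizable_space T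
        \<and> (\<forall>U. openin T U \<longrightarrow> openin (subtopology \<tau> (band_gen u)) U)
        \<and> (\<forall>s. (\<forall>n. s n \<in> {0..u}) \<and> tvs_cauchy T s \<longrightarrow>
               (\<exists>l\<in>{0..u}. net_tendsto T UNIV (\<le>) s l)))"

definition Us :: "'a::{ordered_real_vector,lattice_ab_group_add_abs} topology \<Rightarrow> 'a \<Rightarrow> nat \<Rightarrow> 'a set" where
  "Us \<tau> u = (SOME U. useq (Tt \<tau> u) (band_gen u) U)"

lemma Tt_props:
  assumes "lic_solidly_submetrisable \<tau>" "0 \<le> u"
  shows "locally_solid_on (band_gen u) (Tt \<tau> u) \<and> metrizable_space (Tt \<tau> u)
        \<and> (\<forall>U. openin (Tt \<tau> u) U \<longrightarrow> openin (subtopology \<tau> (band_gen u)) U)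
        \<and> (\<forall>s. (\<forall>n. s n \<in> {0..u}) \<and> tvs_cauchy (Tt \<tau> u) s \<longrightarrow>
               (\<exists>l\<in>{0..u}. net_tendsto (Tt \<tau> u) UNIV (\<le>) s l))"
proof -
  have "\<exists>T. locally_solid_on (band_gen u) T \<and> metrizable_space T
        \<and> (\<forall>U. openin T U \<longrightarrow> openin (subtopology \<tau> (band_gen u)) U)
        \<and> (\<forall>s. (\<forall>n. s n \<in> {0..u}) \<and> tvs_cauchy T s \<longrightarrow>
               (\<exists>l\<in>{0..u}. net_tendsto T UNIV (\<le>) s l))"
    using assms unfolding lic_solidly_submetrisable_def by blast
  then show ?thesis unfolding Tt_def by (rule someI_ex)
qed

lemma Us_props:
  assumes "lic_solidly_submetrisable \<tau>" "0 \<le> u"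
  shows "useq (Tt \<tau> u) (band_gen u) (Us \<tau> u)"
proof -
  have "\<exists>U. useq (Tt \<tau> u) (band_gen u) U"
  proof (rule useq_ex)
    show "locally_solid_on (band_gen u) (Tt \<tau> u)" using Tt_props[OF assms] by blast
    show "first_countable (Tt \<tau> u)" using Tt_props[OF assms] metrizable_imp_first_countable by blast
    show "0 \<in> band_gen u" using bg_solid[OF bg_self, of 0 u] by simp
  qed
  then show ?thesis unfolding Us_def by (rule someI_ex)
qed

lemma alg1:
  fixes a y u :: "'a::{ordered_real_vector,lattice_ab_group_add_abs}"
  assumes "0 \<le> a" "0 \<le> u" "0 \<le> r"
  shows "inf a \<bar>y\<bar> \<le> inf a (r *\<^sub>R u) + sup (\<bar>y\<bar> - r *\<^sub>R u) 0"
proof -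
  have "\<bar>y\<bar> \<le> r *\<^sub>R u + sup (\<bar>y\<bar> - r *\<^sub>R u) 0"
    by (metis add.commute diff_le_eq sup.cobounded1)
  then have "inf a \<bar>y\<bar> \<le> inf a (r *\<^sub>R u + sup (\<bar>y\<bar> - r *\<^sub>R u) 0)"
    by (meson inf_mono order_refl)
  also have "\<dots> \<le> inf a (r *\<^sub>R u) + inf a (sup (\<bar>y\<bar> - r *\<^sub>R u) 0)"
    using assms by (intro inf_add_le) (auto simp: scaleR_nonneg_nonneg)
  also have "\<dots> \<le> inf a (r *\<^sub>R u) + sup (\<bar>y\<bar> - r *\<^sub>R u) 0"
    by (meson add_left_mono inf.cobounded2)
  finally show ?thesis .
qed

lemma alg2:
  fixes a u :: "'a::{ordered_real_vector,lattice_ab_group_add_abs}"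
  assumes "0 \<le> a" "1 \<le> r"
  shows "inf a (r *\<^sub>R u) \<le> r *\<^sub>R inf a u"
proof -
  have "a \<le> r *\<^sub>R a" using assms scaleR_right_mono[of 1 r a] by simp
  then have "inf a (r *\<^sub>R u) \<le> inf (r *\<^sub>R a) (r *\<^sub>R u)" by (meson inf_mono order_refl)
  also have "\<dots> = r *\<^sub>R inf a u" using assms by (simp add: scaleR_inf)
  finally show ?thesis .
qed

lemma alg3:
  fixes h u Y :: "'a::{ordered_real_vector,lattice_ab_group_add_abs}"
  assumes h0: "0 \<le> h" and u0: "0 \<le> u" and Y0: "0 \<le> Y" and j0: "0 \<le> j"
    and hle: "h \<le> sup (Y - j *\<^sub>R u) 0"
  shows "j *\<^sub>R inf h u \<le> Y"
proof -
  define a where "a = Y - j *\<^sub>R u"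
  define t where "t = inf h u"
  define Nn where "Nn = sup (- a) 0"
  have t0: "0 \<le> t" unfolding t_def using h0 u0 by simp
  have N0: "0 \<le> Nn" unfolding Nn_def by simp
  have "inf t Nn \<le> inf (sup a 0) Nn" unfolding t_def using hle unfolding a_def
    by (meson inf_mono order_refl le_infI1)
  then have "inf t Nn \<le> 0" using pprt_nprt_disj[of a] unfolding Nn_def by simp
  then have tN: "inf t Nn = 0" using t0 N0 by (simp add: antisym)
  have jtN: "inf (j *\<^sub>R t) Nn = 0" using disj_scale[OF t0 N0 tN j0] .
  have "j *\<^sub>R t \<le> j *\<^sub>R u" unfolding t_def using j0 by (intro scaleR_left_mono) auto
  also have "j *\<^sub>R u = Y - a" unfolding a_def by simp
  also have "a = sup a 0 - Nn" unfolding Nn_def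
    using prts[of a] by (simp add: pprt_def nprt_def neg_sup_eq_inf)
  finally have "j *\<^sub>R t \<le> Y - (sup a 0 - Nn)" .
  also have "\<dots> \<le> Y + Nn" by (simp add: algebra_simps)
  finally have "j *\<^sub>R t \<le> Y + Nn" .
  then have "j *\<^sub>R t = inf (j *\<^sub>R t) (Y + Nn)" by (simp add: inf_absorb1)
  also have "\<dots> \<le> inf (j *\<^sub>R t) Y + inf (j *\<^sub>R t) Nn"
    using t0 Y0 N0 j0 by (intro inf_add_le) (auto simp: scaleR_nonneg_nonneg)
  also have "\<dots> \<le> Y" using jtN by simp
  finally show ?thesis unfolding t_def .
qed



lemma E_lemma:
  fixes d :: "nat \<Rightarrow> 'a::{ordered_real_vector,lattice_ab_group_add_abs}" and \<tau> :: "'a topology"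
  assumes arch: "archimedean_vl (UNIV :: 'a set)" and lic: "lic_solidly_submetrisable \<tau>"
    and UUdef: "UU = (\<lambda>N. \<bar>x\<bar> + (\<Sum>i<N. \<bar>d i\<bar>))"
    and H: "\<forall>k N. N \<le> k \<longrightarrow> inf \<bar>d k - x\<bar> (UU N) \<in> Us \<tau> (UU N) (Suc k)"
    and h0: "0 \<le> h"
    and hZ: "\<forall>s. (\<exists>K. \<forall>k\<ge>K. inf \<bar>d k - x\<bar> \<bar>y\<bar> \<le> s) \<longrightarrow> h \<le> s"
  shows "h \<le> 0"
proof -
  define w where "w = (\<lambda>k. inf \<bar>d k - x\<bar> \<bar>y\<bar>)"
  have w0: "0 \<le> w k" for k unfolding w_def by simp
  have hZ': "h \<le> s" if "\<forall>k\<ge>K. w k \<le> s" for s K using hZ that unfolding w_def by blast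
  have UU0: "0 \<le> UU N" for N unfolding UUdef by (simp add: sum_nonneg add_nonneg_nonneg)
  have disjN: "inf h (UU N) = 0" for N
  proof -
    define u where "u = UU N"
    have u0: "0 \<le> u" unfolding u_def by (rule UU0)
    define T where "T = Tt \<tau> u"
    define S where "S = band_gen u"
    define Uq where "Uq = Us \<tau> u"
    have Tp: "locally_solid_on S T \<and> metrizable_space T
        \<and> (\<forall>U. openin T U \<longrightarrow> openin (subtopology \<tau> S) U)
        \<and> (\<forall>s. (\<forall>n. s n \<in> {0..u}) \<and> tvs_cauchy T s \<longrightarrow>
               (\<exists>l\<in>{0..u}. net_tendsto T UNIV (\<le>) s l))"
      unfolding T_def S_def using Tt_props[OF lic u0] .
    have uq: "useq T S Uq" unfolding T_def S_def Uq_def using Us_props[OF lic u0] .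
    have lt: "linear_topology_on S T" using Tp unfolding locally_solid_on_def by blast
    have compl: "\<forall>s. (\<forall>n. s n \<in> {0..u}) \<and> tvs_cauchy T s \<longrightarrow> (\<exists>l\<in>{0..u}. net_tendsto T UNIV (\<le>) s l)"
      using Tp by blast
    have Sdiff: "\<forall>a\<in>S. \<forall>b\<in>S. a - b \<in> S" unfolding S_def using bg_diff by blast
    have Ssol: "\<forall>a b. b \<in> S \<longrightarrow> \<bar>a\<bar> \<le> \<bar>b\<bar> \<longrightarrow> a \<in> S" unfolding S_def using bg_solid by blast
    have uS: "u \<in> S" unfolding S_def by (rule bg_self)
    define v where "v = (\<lambda>k'. inf \<bar>d (N + k') - x\<bar> u)"
    have vb: "\<forall>k. 0 \<le> v k \<and> v k \<le> u" unfolding v_def using u0 by simp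
    have vU: "\<forall>k. v k \<in> Uq (Suc k)"
    proof
      fix k
      have "v k \<in> Uq (Suc (N + k))" unfolding v_def Uq_def u_def using H by simp
      moreover have "Uq (Suc (N + k)) \<subseteq> Uq (Suc k)" using useq_anti[OF uq] by simp
      ultimately show "v k \<in> Uq (Suc k)" by blast
    qed
    obtain z where zv: "\<forall>n k. n \<le> k \<longrightarrow> v k \<le> z n" and zi: "\<forall>h. (\<forall>n. h \<le> z n) \<longrightarrow> h \<le> 0"
      using lemL[OF lt uq Sdiff Ssol uS u0 compl vb vU] by blast
    have hc: "h \<le> sup (\<bar>y\<bar> - real (Suc i) *\<^sub>R u) 0" for i
    proof -
      define r where "r = real (Suc i)"
      have r1: "1 \<le> r" unfolding r_def by simp
      define c where "c = sup (\<bar>y\<bar> - r *\<^sub>R u) 0"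
      have "(1 / r) *\<^sub>R (h - c) \<le> z m" for m
      proof -
        have "w k \<le> c + r *\<^sub>R z m" if k: "N + m \<le> k" for k
        proof -
          have "w k \<le> inf \<bar>d k - x\<bar> (r *\<^sub>R u) + c"
            unfolding w_def c_def using u0 r1 by (intro alg1) auto
          also have "inf \<bar>d k - x\<bar> (r *\<^sub>R u) \<le> r *\<^sub>R inf \<bar>d k - x\<bar> u"
            using r1 by (intro alg2) auto
          also have "inf \<bar>d k - x\<bar> u = v (k - N)" unfolding v_def using k by simp
          also have "v (k - N) \<le> z m" using zv k by simp
          then have "r *\<^sub>R v (k - N) \<le> r *\<^sub>R z m" using r1 by (intro scaleR_left_mono) auto
          finally show ?thesis by (simp add: add.commute add_right_mono)
        qed
        then have "h \<le> c + r *\<^sub>R z m" using hZ' by blast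
        then have "h - c \<le> r *\<^sub>R z m" by (simp add: diff_le_eq add.commute)
        then have "(1 / r) *\<^sub>R (h - c) \<le> (1 / r) *\<^sub>R (r *\<^sub>R z m)"
          using r1 by (intro scaleR_left_mono) auto
        then show ?thesis using r1 by simp
      qed
      then have "(1 / r) *\<^sub>R (h - c) \<le> 0" using zi by blast
      then have "r *\<^sub>R ((1 / r) *\<^sub>R (h - c)) \<le> r *\<^sub>R 0" using r1 by (intro scaleR_left_mono) auto
      then have "h - c \<le> 0" using r1 by simp
      then have "h \<le> c" by (simp only: diff_le_0_iff_le)
      then show ?thesis unfolding c_def r_def .
    qed
    have "real j *\<^sub>R inf h u \<le> \<bar>y\<bar>" for j
    proof (cases j)
      case 0 then show ?thesis by simp
    next
      case (Suc i)
      show ?thesis unfolding Suc using alg3[OF h0 u0 abs_ge_zero _ hc[of i]] by simp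
    qed
    then have "inf h u \<le> 0" using arch unfolding archimedean_vl_def by blast
    moreover have "0 \<le> inf h u" using h0 u0 by simp
    ultimately show ?thesis unfolding u_def by simp
  qed
  have disjw: "inf h (w k) = 0" for k
  proof -
    have "w k \<le> \<bar>d k - x\<bar>" unfolding w_def by simp
    also have "\<dots> \<le> \<bar>d k\<bar> + \<bar>x\<bar>" by (rule abs_triangle_ineq4)
    also have "\<dots> \<le> UU (Suc k)" unfolding UUdef
      by (simp add: add.commute add_increasing sum_nonneg)
    finally have "inf h (w k) \<le> inf h (UU (Suc k))" by (meson inf_mono order_refl)
    then have "inf h (w k) \<le> 0" using disjN by simp
    moreover have "0 \<le> inf h (w k)" using h0 w0 by simp
    ultimately show ?thesis by simp
  qed
  have Zcl: "\<forall>k\<ge>K. w k \<le> s - h" if "\<forall>k\<ge>K. w k \<le> s" for s K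
  proof (intro allI impI)
    fix k assume k: "K \<le> k"
    have hs: "h \<le> s" using hZ' that by blast
    have "w k + h = sup (w k) h + inf (w k) h" by (rule add_eq_inf_sup)
    also have "\<dots> = sup (w k) h" using disjw[of k] by (simp add: inf_commute)
    also have "\<dots> \<le> s" using that k hs by simp
    finally show "w k \<le> s - h" by (simp add: le_diff_eq)
  qed
  have ind: "\<forall>k\<ge>0. w k \<le> \<bar>y\<bar> - real m *\<^sub>R h" for m
  proof (induction m)
    case 0 then show ?case unfolding w_def by simp
  next
    case (Suc m)
    then have "\<forall>k\<ge>0. w k \<le> (\<bar>y\<bar> - real m *\<^sub>R h) - h" by (rule Zcl)
    then show ?case by (simp add: algebra_simps)
  qed
  have "real n *\<^sub>R h \<le> \<bar>y\<bar>" for n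
  proof (cases n)
    case 0 then show ?thesis by simp
  next
    case (Suc m)
    have "h \<le> \<bar>y\<bar> - real m *\<^sub>R h" using hZ' ind by blast
    then show ?thesis unfolding Suc by (simp add: algebra_simps le_diff_eq)
  qed
  then show "h \<le> 0" using arch unfolding archimedean_vl_def by blast
qed



lemma smax_le: "\<forall>i\<le>m. v (n + i) \<le> s \<Longrightarrow> smax v n m \<le> s"
  by (induction m) auto

lemma smax_F: "vector_sublattice F \<Longrightarrow> \<forall>k. v k \<in> F \<Longrightarrow> smax v n m \<in> F"
  by (induction m) (auto intro: vs_sup)

lemma main_uo:
  fixes d :: "nat \<Rightarrow> 'a::{ordered_real_vector,lattice_ab_group_add_abs}" and \<tau> :: "'a topology"
  assumes arch: "archimedean_vl (UNIV :: 'a set)" and lic: "lic_solidly_submetrisable \<tau>"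
    and reg: "regular_sublattice F" and xF: "x \<in> F" and dF: "\<forall>k. d k \<in> F"
    and UUdef: "UU = (\<lambda>N. \<bar>x\<bar> + (\<Sum>i<N. \<bar>d i\<bar>))"
    and H: "\<forall>k N. N \<le> k \<longrightarrow> inf \<bar>d k - x\<bar> (UU N) \<in> Us \<tau> (UU N) (Suc k)"
  shows "uo_conv_in F UNIV (\<le>) d x"
  unfolding uo_conv_in_def
proof
  fix y assume yF: "y \<in> F"
  have vs: "vector_sublattice F" using reg unfolding regular_sublattice_def by blast
  define w where "w = (\<lambda>k. inf \<bar>d k - x\<bar> \<bar>y\<bar>)"
  have ayF: "\<bar>y\<bar> \<in> F" using vs yF by (rule vs_abs)
  have wF: "w k \<in> F" for k unfolding w_def using vs dF xF ayF yF
    by (intro vs_inf vs_abs vs_diff) auto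
  have wb: "\<forall>k. 0 \<le> w k \<and> w k \<le> \<bar>y\<bar>" unfolding w_def by simp
  define B where "B = {e \<in> F. e \<le> \<bar>y\<bar> \<and> (\<exists>K. \<forall>k\<ge>K. w k \<le> e)}"
  have yB: "\<bar>y\<bar> \<in> B" unfolding B_def using ayF wb by auto
  have Binf: "inf e1 e2 \<in> B" if ee: "e1 \<in> B" "e2 \<in> B" for e1 e2
  proof -
    obtain K1 K2 where "\<forall>k\<ge>K1. w k \<le> e1" "\<forall>k\<ge>K2. w k \<le> e2" using ee unfolding B_def by blast
    then have "\<forall>k\<ge>max K1 K2. w k \<le> inf e1 e2" by simp
    moreover have "inf e1 e2 \<in> F" using ee vs unfolding B_def by (auto intro: vs_inf)
    moreover have "inf e1 e2 \<le> \<bar>y\<bar>" using ee unfolding B_def by (auto intro: le_infI1)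
    ultimately show ?thesis unfolding B_def by blast
  qed
  have B0: "0 \<le> e" if eB: "e \<in> B" for e
  proof -
    obtain K where "\<forall>k\<ge>K. w k \<le> e" using eB unfolding B_def by blast
    then have "w K \<le> e" by simp
    then show ?thesis using wb by (meson order_trans)
  qed
  have Ginf: "g \<le> 0" if gF: "g \<in> F" and gB: "\<forall>b\<in>B. g \<le> b" for g
  proof -
    have gs: "g \<le> s" if sK: "\<forall>k\<ge>K. w k \<le> s" for s K
    proof (rule lemR[OF arch reg])
      show "range (smax w K) \<subseteq> F" using smax_F[OF vs] wF by blast
      show "range (smax w K) \<noteq> {}" by simp
      show "\<forall>w1\<in>range (smax w K). \<forall>w2\<in>range (smax w K). \<exists>w3\<in>range (smax w K). w1 \<le> w3 \<and> w2 \<le> w3"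
      proof (intro ballI)
        fix w1 w2 assume "w1 \<in> range (smax w K)" "w2 \<in> range (smax w K)"
        then obtain m1 m2 where "w1 = smax w K m1" "w2 = smax w K m2" by blast
        then show "\<exists>w3\<in>range (smax w K). w1 \<le> w3 \<and> w2 \<le> w3"
          by (intro bexI[of _ "smax w K (max m1 m2)"]) (auto intro: smax_mono)
      qed
      show "\<bar>y\<bar> \<in> F" by (rule ayF)
      show "\<forall>w\<in>range (smax w K). w \<le> \<bar>y\<bar>" using smax_bounds[OF wb] by blast
      show "g \<in> F" by (rule gF)
      show "\<forall>d\<in>F. (\<forall>w\<in>range (smax w K). w \<le> d) \<longrightarrow> g \<le> d"
      proof (intro ballI impI)
        fix e assume eF: "e \<in> F" and eu: "\<forall>w\<in>range (smax w K). w \<le> e"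
        have "\<forall>k\<ge>K. w k \<le> inf e \<bar>y\<bar>"
        proof (intro allI impI)
          fix k assume "K \<le> k"
          then have "w (K + (k - K)) \<le> smax w K (k - K)" by (intro smax_ge) simp
          then have "w k \<le> smax w K (k - K)" using \<open>K \<le> k\<close> by simp
          then have "w k \<le> e" using eu by (meson order_trans rangeI)
          then show "w k \<le> inf e \<bar>y\<bar>" using wb by simp
        qed
        moreover have "inf e \<bar>y\<bar> \<in> F" using vs eF ayF by (rule vs_inf)
        ultimately have "inf e \<bar>y\<bar> \<in> B" unfolding B_def by auto
        then have "g \<le> inf e \<bar>y\<bar>" using gB by blast
        then show "g \<le> e" by simp
      qed
      show "\<forall>w\<in>range (smax w K). w \<le> s"
        using sK by (auto intro!: smax_le)
    qed
    have "sup g 0 \<le> 0"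
    proof (rule E_lemma[OF arch lic UUdef H])
      show "0 \<le> sup g 0" by simp
      show "\<forall>s. (\<exists>K. \<forall>k\<ge>K. inf \<bar>d k - x\<bar> \<bar>y\<bar> \<le> s) \<longrightarrow> sup g 0 \<le> s"
      proof (intro allI impI)
        fix s assume "\<exists>K. \<forall>k\<ge>K. inf \<bar>d k - x\<bar> \<bar>y\<bar> \<le> s"
        then obtain K where K: "\<forall>k\<ge>K. w k \<le> s" unfolding w_def by blast
        then have "g \<le> s" by (rule gs)
        moreover have "0 \<le> s" using K wb by (meson order_refl order_trans)
        ultimately show "sup g 0 \<le> s" by simp
      qed
    qed
    then show ?thesis by simp
  qed
  show "order_conv_in F UNIV (\<le>) (\<lambda>a. inf \<bar>d a - x\<bar> \<bar>y\<bar>) 0"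
    unfolding order_conv_in_def
  proof (intro exI[of _ B] exI[of _ "\<lambda>a b. b \<le> a"] exI[of _ "\<lambda>a. a"] conjI)
    show "directed_set B (\<lambda>a b. b \<le> a)" unfolding directed_set_def
      using yB Binf by (auto intro: order_trans) (metis inf.cobounded1 inf.cobounded2)
    show "\<forall>b\<in>B. b \<in> F" unfolding B_def by blast
    show "\<forall>b\<in>B. \<forall>b'\<in>B. b' \<le> b \<longrightarrow> b' \<le> b" by blast
    show "\<forall>b\<in>B. 0 \<le> b" using B0 by blast
    show "\<forall>z\<in>F. (\<forall>b\<in>B. z \<le> b) \<longrightarrow> z \<le> 0" using Ginf by blast
    show "\<forall>b0\<in>B. \<exists>a0\<in>UNIV. \<forall>a\<in>UNIV. a0 \<le> a \<longrightarrow> \<bar>inf \<bar>d a - x\<bar> \<bar>y\<bar> - 0\<bar> \<le> b0"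
    proof
      fix b0 assume "b0 \<in> B"
      then obtain K where "\<forall>k\<ge>K. w k \<le> b0" unfolding B_def by blast
      then show "\<exists>a0\<in>UNIV. \<forall>a\<in>UNIV. a0 \<le> a \<longrightarrow> \<bar>inf \<bar>d a - x\<bar> \<bar>y\<bar> - 0\<bar> \<le> b0"
        unfolding w_def by auto
    qed
  qed
qed



lemma event:
  fixes \<tau> :: "'a::{ordered_real_vector,lattice_ab_group_add_abs} topology"
  assumes ls: "locally_solid_on UNIV \<tau>" and lic: "lic_solidly_submetrisable \<tau>"
    and conv: "net_tendsto \<tau> A le xs x" and u0: "0 \<le> u"
  shows "\<exists>a0\<in>A. \<forall>a\<in>A. le a0 a \<longrightarrow> inf \<bar>xs a - x\<bar> u \<in> Us \<tau> u j"
proof -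
  have uq: "useq (Tt \<tau> u) (band_gen u) (Us \<tau> u)" using Us_props[OF lic u0] .
  obtain W where W: "openin (Tt \<tau> u) W" "0 \<in> W" "W \<subseteq> Us \<tau> u j" using useq_W[OF uq] by blast
  have "openin (subtopology \<tau> (band_gen u)) W" using Tt_props[OF lic u0] W(1) by blast
  then obtain Q where Q: "openin \<tau> Q" "W = Q \<inter> band_gen u" unfolding openin_subtopology by blast
  have "0 \<in> Q" using Q W by blast
  then obtain V W' where VW: "solid_in UNIV V" "openin \<tau> W'" "0 \<in> W'" "W' \<subseteq> V" "V \<subseteq> Q"
    using ls Q(1) unfolding locally_solid_on_def by blast
  have lt: "linear_topology_on UNIV \<tau>" using ls unfolding locally_solid_on_def by blast
  have op: "openin \<tau> {a \<in> UNIV. a - x \<in> W'}" using trans_open[OF lt _ VW(2), of x] by simp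
  have xin: "x \<in> {a \<in> UNIV. a - x \<in> W'}" using VW(3) by simp
  have "\<forall>U. openin \<tau> U \<and> x \<in> U \<longrightarrow> (\<exists>a0\<in>A. \<forall>a\<in>A. le a0 a \<longrightarrow> xs a \<in> U)"
    using conv unfolding net_tendsto_def by blast
  then have "\<exists>a0\<in>A. \<forall>a\<in>A. le a0 a \<longrightarrow> xs a \<in> {a \<in> UNIV. a - x \<in> W'}"
    using op xin by blast
  then obtain a0 where a0: "a0 \<in> A" "\<forall>a\<in>A. le a0 a \<longrightarrow> xs a - x \<in> W'" by auto
  have "inf \<bar>xs a - x\<bar> u \<in> Us \<tau> u j" if "a \<in> A" "le a0 a" for a
  proof -
    define e where "e = inf \<bar>xs a - x\<bar> u"
    have e0: "0 \<le> e" unfolding e_def using u0 by simp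
    have "xs a - x \<in> V" using a0 that VW(4) by blast
    moreover have "\<bar>e\<bar> \<le> \<bar>xs a - x\<bar>" using e0 unfolding e_def by simp
    ultimately have "e \<in> V" using VW(1) unfolding solid_in_def by blast
    then have "e \<in> Q" using VW(5) by blast
    moreover have "e \<in> band_gen u" using bg_solid[OF bg_self, of e u] e0 u0 unfolding e_def by simp
    ultimately have "e \<in> W" using Q(2) by blast
    then show ?thesis using W(3) unfolding e_def by blast
  qed
  then show ?thesis using a0(1) by blast
qed

lemma dir_dd: "directed_set A le \<Longrightarrow> \<forall>a\<in>A. \<forall>b\<in>A. \<exists>c\<in>A. le a c \<and> le b c"
  unfolding directed_set_def by (elim conjE) assumption
lemma dir_tr: "directed_set A le \<Longrightarrow> \<forall>a\<in>A. \<forall>b\<in>A. \<forall>c\<in>A. le a b \<longrightarrow> le b c \<longrightarrow> le a c"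
  unfolding directed_set_def by (elim conjE) assumption
lemma dir_ne: "directed_set A le \<Longrightarrow> A \<noteq> {}"
  unfolding directed_set_def by (elim conjE) assumption

lemma multi_ev:
  fixes K :: nat
  assumes dir: "directed_set A le"
    and ev: "\<forall>N\<le>K. \<exists>a0\<in>A. \<forall>a\<in>A. le a0 a \<longrightarrow> P N a"
  shows "\<exists>a0\<in>A. \<forall>a\<in>A. le a0 a \<longrightarrow> (\<forall>N\<le>K. P N a)"
  using ev
proof (induction K)
  case 0
  then obtain a0 where "a0 \<in> A" "\<forall>a\<in>A. le a0 a \<longrightarrow> P 0 a" by blast
  then show ?case by auto
next
  case (Suc K)
  then have "\<exists>a0\<in>A. \<forall>a\<in>A. le a0 a \<longrightarrow> (\<forall>N\<le>K. P N a)" by simp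
  then obtain a1 where a1: "a1 \<in> A" "\<forall>a\<in>A. le a1 a \<longrightarrow> (\<forall>N\<le>K. P N a)" by blast
  obtain a2 where a2: "a2 \<in> A" "\<forall>a\<in>A. le a2 a \<longrightarrow> P (Suc K) a" using Suc.prems by blast
  have dd: "\<forall>a\<in>A. \<forall>b\<in>A. \<exists>c\<in>A. le a c \<and> le b c" using dir by (rule dir_dd)
  obtain c where c: "c \<in> A" "le a1 c" "le a2 c" using dd a1(1) a2(1) by blast
  have "\<forall>a\<in>A. le c a \<longrightarrow> (\<forall>N\<le>Suc K. P N a)"
  proof (intro ballI impI allI)
    fix a N assume a: "a \<in> A" "le c a" and N: "N \<le> Suc K"
    have tr: "\<forall>a\<in>A. \<forall>b\<in>A. \<forall>c\<in>A. le a b \<longrightarrow> le b c \<longrightarrow> le a c"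
      using dir by (rule dir_tr)
    have "le a1 a" using tr[rule_format, OF a1(1) c(1) a(1) c(2) a(2)] .
    moreover have "le a2 a" using tr[rule_format, OF a2(1) c(1) a(1) c(3) a(2)] .
    ultimately show "P N a" using a1 a2 a N by (cases "N = Suc K") auto
  qed
  then show ?case using c(1) by blast
qed

primrec hist :: "('i list \<Rightarrow> 'i \<Rightarrow> 'i) \<Rightarrow> (nat \<Rightarrow> 'i) \<Rightarrow> nat \<Rightarrow> 'i list" where
  "hist ch ts 0 = [ch [] (ts 0)]"
| "hist ch ts (Suc n) = hist ch ts n @ [ch (hist ch ts n) (ts (Suc n))]"

lemma hist_cong: "\<forall>i\<le>n. ts i = ts' i \<Longrightarrow> hist ch ts n = hist ch ts' n"
  by (induction n) auto

lemma hist_map: "hist ch ts n = map (\<lambda>i. last (hist ch ts i)) [0..<Suc n]"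
proof (induction n)
  case 0 then show ?case by simp
next
  case (Suc n)
  have e1: "hist ch ts (Suc n) = hist ch ts n @ [last (hist ch ts (Suc n))]" by simp
  have e2: "map (\<lambda>i. last (hist ch ts i)) [0..<Suc (Suc n)]
      = map (\<lambda>i. last (hist ch ts i)) [0..<Suc n] @ [last (hist ch ts (Suc n))]"
    by (simp only: upt_Suc_append[of 0 "Suc n"] map_append list.map zero_le)
  show ?case unfolding e2 by (subst e1) (subst Suc.IH, rule refl)
qed

lemma hist_step: "last (hist ch ts k) = ch (map (\<lambda>i. last (hist ch ts i)) [0..<k]) (ts k)"
proof (cases k)
  case 0 then show ?thesis by simp
next
  case (Suc n)
  then show ?thesis using hist_map[of ch ts n] by simp
qed



definition UUp :: "('i \<Rightarrow> 'a::{ordered_real_vector,lattice_ab_group_add_abs}) \<Rightarrow> 'a \<Rightarrow> 'i list \<Rightarrow> nat \<Rightarrow> 'a" where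
  "UUp xs x prev N = \<bar>x\<bar> + (\<Sum>i<N. \<bar>xs (prev ! i)\<bar>)"

definition condp :: "'a::{ordered_real_vector,lattice_ab_group_add_abs} topology \<Rightarrow> ('i \<Rightarrow> 'a) \<Rightarrow> 'a \<Rightarrow> 'i list \<Rightarrow> 'i \<Rightarrow> bool" where
  "condp \<tau> xs x prev a \<longleftrightarrow> (\<forall>N\<le>length prev.
     inf \<bar>xs a - x\<bar> (UUp xs x prev N) \<in> Us \<tau> (UUp xs x prev N) (Suc (length prev)))"

definition choosep :: "'a::{ordered_real_vector,lattice_ab_group_add_abs} topology \<Rightarrow> 'i set \<Rightarrow> ('i \<Rightarrow> 'i \<Rightarrow> bool) \<Rightarrow> ('i \<Rightarrow> 'a) \<Rightarrow> 'a \<Rightarrow> 'i list \<Rightarrow> 'i \<Rightarrow> 'i" where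
  "choosep \<tau> A le xs x prev t = (SOME a. a \<in> A \<and> strictly le t a
      \<and> (prev \<noteq> [] \<and> last prev \<in> A \<longrightarrow> strictly le (last prev) a) \<and> condp \<tau> xs x prev a)"

lemma choose_spec:
  fixes \<tau> :: "'a::{ordered_real_vector,lattice_ab_group_add_abs} topology"
  assumes ls: "locally_solid_on UNIV \<tau>" and lic: "lic_solidly_submetrisable \<tau>"
    and dir: "directed_set A le" and conv: "net_tendsto \<tau> A le xs x"
    and nl: "\<forall>c\<in>A. \<exists>d\<in>A. \<not> le d c" and tA: "t \<in> A"
  shows "choosep \<tau> A le xs x prev t \<in> A \<and> strictly le t (choosep \<tau> A le xs x prev t)
      \<and> (prev \<noteq> [] \<and> last prev \<in> A \<longrightarrow> strictly le (last prev) (choosep \<tau> A le xs x prev t))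
      \<and> condp \<tau> xs x prev (choosep \<tau> A le xs x prev t)"
proof -
  have T: "le a c" if "a \<in> A" "b \<in> A" "c \<in> A" "le a b" "le b c" for a b c
    using dir_tr[OF dir] that by blast
  have D: "\<exists>c\<in>A. le a c \<and> le b c" if "a \<in> A" "b \<in> A" for a b
    using dir_dd[OF dir] that by blast
  have "\<forall>N\<le>length prev. \<exists>a0\<in>A. \<forall>a\<in>A. le a0 a \<longrightarrow>
      inf \<bar>xs a - x\<bar> (UUp xs x prev N) \<in> Us \<tau> (UUp xs x prev N) (Suc (length prev))"
  proof (intro allI impI)
    fix N
    have "0 \<le> UUp xs x prev N" unfolding UUp_def by (simp add: sum_nonneg add_nonneg_nonneg)
    then show "\<exists>a0\<in>A. \<forall>a\<in>A. le a0 a \<longrightarrow>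
      inf \<bar>xs a - x\<bar> (UUp xs x prev N) \<in> Us \<tau> (UUp xs x prev N) (Suc (length prev))"
      by (rule event[OF ls lic conv])
  qed
  from multi_ev[OF dir this] obtain a0 where a0: "a0 \<in> A" "\<forall>a\<in>A. le a0 a \<longrightarrow> condp \<tau> xs x prev a"
    unfolding condp_def by blast
  define p where "p = (if prev \<noteq> [] \<and> last prev \<in> A then last prev else t)"
  have pA: "p \<in> A" unfolding p_def using tA by auto
  obtain c1 where c1: "c1 \<in> A" "le a0 c1" "le t c1" using D[OF a0(1) tA] by blast
  obtain c where c: "c \<in> A" "le c1 c" "le p c" using D[OF c1(1) pA] by blast
  obtain d where d: "d \<in> A" "\<not> le d c" using nl c(1) by blast
  obtain e where e: "e \<in> A" "le c e" "le d e" using D[OF c(1) d(1)] by blast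
  have nec: "\<not> le e c" using T[OF d(1) e(1) c(1) e(3)] d(2) by blast
  have tc: "le t c" using T[OF tA c1(1) c(1) c1(3) c(2)] .
  have "le a0 e" using T[OF a0(1) c1(1) e(1) c1(2) T[OF c1(1) c(1) e(1) c(2) e(2)]] .
  then have ce: "condp \<tau> xs x prev e" using a0 e(1) by blast
  have st: "strictly le t e" unfolding strictly_def
    using T[OF tA c(1) e(1) tc e(2)] T[OF e(1) tA c(1) _ tc] nec by blast
  have sp: "strictly le p e" unfolding strictly_def
    using T[OF pA c(1) e(1) c(3) e(2)] T[OF e(1) pA c(1) _ c(3)] nec by blast
  have "prev \<noteq> [] \<and> last prev \<in> A \<longrightarrow> strictly le (last prev) e" using sp unfolding p_def by auto
  then have "\<exists>a. a \<in> A \<and> strictly le t a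
      \<and> (prev \<noteq> [] \<and> last prev \<in> A \<longrightarrow> strictly le (last prev) a) \<and> condp \<tau> xs x prev a"
    using e(1) st ce by blast
  then show ?thesis unfolding choosep_def by (rule someI_ex)
qed


lemma uo_const:
  fixes x :: "'a::{ordered_real_vector,lattice_ab_group_add_abs}"
  assumes "vector_sublattice F"
  shows "uo_conv_in F UNIV (\<le>) (\<lambda>n::nat. x) x"
  unfolding uo_conv_in_def
proof
  fix y assume "y \<in> F"
  show "order_conv_in F UNIV (\<le>) (\<lambda>a::nat. inf \<bar>x - x\<bar> \<bar>y\<bar>) 0"
    unfolding order_conv_in_def
  proof (intro exI[of _ "{0::'a}"] exI[of _ "(\<le>) :: 'a \<Rightarrow> 'a \<Rightarrow> bool"] exI[of _ "\<lambda>a::'a. a"] conjI)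
    show "directed_set {0::'a} (\<le>)" unfolding directed_set_def by simp
    show "\<forall>b\<in>{0::'a}. b \<in> F" using vs_zero[OF assms] by simp
  qed (auto simp: inf_absorb1)
qed

theorem theorem4p1:
  fixes \<tau> :: "'a::{ordered_real_vector,lattice_ab_group_add_abs} topology"
    and F :: "'a set" and A :: "'i set" and le :: "'i \<Rightarrow> 'i \<Rightarrow> bool"
    and xs :: "'i \<Rightarrow> 'a" and x :: 'a
  assumes arch: "archimedean_vl (UNIV :: 'a set)"
    and ls: "locally_solid_on UNIV \<tau>"
    and lic: "lic_solidly_submetrisable \<tau>"
    and reg: "regular_sublattice F"
    and dir: "directed_set A le"
    and netF: "\<forall>a\<in>A. xs a \<in> F"
    and xF: "x \<in> F"
    and conv: "net_tendsto \<tau> A le xs x"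
  shows "(\<forall>aL\<in>A. (\<forall>a\<in>A. le a aL) \<longrightarrow> x = xs aL)
    \<and> ((\<not> (\<exists>aL\<in>A. \<forall>a\<in>A. le a aL)) \<longrightarrow>
        (\<exists>strat :: 'i list \<Rightarrow> 'i. \<forall>ts :: nat \<Rightarrow> 'i. (\<forall>n. ts n \<in> A) \<longrightarrow>
           (let \<alpha> = (\<lambda>n. strat (map ts [0..<Suc n])) in
              (\<forall>n. \<alpha> n \<in> A) \<and> (\<forall>n. strictly le (\<alpha> n) (\<alpha> (Suc n)))
              \<and> (\<forall>n. strictly le (ts n) (\<alpha> n))
              \<and> uo_conv_in F UNIV (\<le>) (\<lambda>n. xs (\<alpha> n)) x)))
    \<and> (\<exists>\<alpha> :: nat \<Rightarrow> 'i. (\<forall>n. \<alpha> n \<in> A) \<and> (\<forall>n. le (\<alpha> n) (\<alpha> (Suc n)))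
              \<and> uo_conv_in F UNIV (\<le>) (\<lambda>n. xs (\<alpha> n)) x)
    \<and> ((\<not> (\<exists>aL\<in>A. \<forall>a\<in>A. le a aL)) \<longrightarrow>
        (\<exists>\<alpha> :: nat \<Rightarrow> 'i. (\<forall>n. \<alpha> n \<in> A) \<and> (\<forall>n. strictly le (\<alpha> n) (\<alpha> (Suc n)))
              \<and> uo_conv_in F UNIV (\<le>) (\<lambda>n. xs (\<alpha> n)) x))"

proof -
  have lt: "linear_topology_on UNIV \<tau>" using ls unfolding locally_solid_on_def by blast
  have hd: "Hausdorff_space \<tau>" and ts: "topspace \<tau> = UNIV" using lt unfolding linear_topology_on_def by auto
  have vs: "vector_sublattice F" using reg unfolding regular_sublattice_def by blast
  have cv: "\<forall>U. openin \<tau> U \<and> x \<in> U \<longrightarrow> (\<exists>a0\<in>A. \<forall>a\<in>A. le a0 a \<longrightarrow> xs a \<in> U)"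
    using conv unfolding net_tendsto_def by blast
  have P1: "\<forall>aL\<in>A. (\<forall>a\<in>A. le a aL) \<longrightarrow> x = xs aL"
  proof (intro ballI impI)
    fix aL assume aL: "aL \<in> A" "\<forall>a\<in>A. le a aL"
    show "x = xs aL"
    proof (rule ccontr)
      assume ne: "x \<noteq> xs aL"
      have "\<forall>x\<in>topspace \<tau>. \<forall>y\<in>topspace \<tau>. x \<noteq> y \<longrightarrow> (\<exists>U V. openin \<tau> U \<and> openin \<tau> V \<and> x \<in> U \<and> y \<in> V \<and> disjnt U V)"
        using hd unfolding Hausdorff_space_def by blast
      then have "\<exists>U V. openin \<tau> U \<and> openin \<tau> V \<and> x \<in> U \<and> xs aL \<in> V \<and> disjnt U V"
        using ne ts by simp
      then obtain Q1 Q2 where Q: "openin \<tau> Q1" "openin \<tau> Q2" "x \<in> Q1" "xs aL \<in> Q2" "disjnt Q1 Q2"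
        by (elim exE conjE)
      obtain a0 where a0: "a0 \<in> A" "\<forall>a\<in>A. le a0 a \<longrightarrow> xs a \<in> Q1" using cv Q(1,3) by blast
      have "xs aL \<in> Q1" using a0 aL by blast
      then show False using Q(4,5) by (auto simp: disjnt_def)
    qed
  qed
  have P2: "(\<not> (\<exists>aL\<in>A. \<forall>a\<in>A. le a aL)) \<longrightarrow>
        (\<exists>strat :: 'i list \<Rightarrow> 'i. \<forall>ts :: nat \<Rightarrow> 'i. (\<forall>n. ts n \<in> A) \<longrightarrow>
           (let \<alpha> = (\<lambda>n. strat (map ts [0..<Suc n])) in
              (\<forall>n. \<alpha> n \<in> A) \<and> (\<forall>n. strictly le (\<alpha> n) (\<alpha> (Suc n)))
              \<and> (\<forall>n. strictly le (ts n) (\<alpha> n))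
              \<and> uo_conv_in F UNIV (\<le>) (\<lambda>n. xs (\<alpha> n)) x))"
  proof
    assume nl0: "\<not> (\<exists>aL\<in>A. \<forall>a\<in>A. le a aL)"
    have nl: "\<forall>c\<in>A. \<exists>d\<in>A. \<not> le d c" using nl0 by blast
    define ch where "ch = choosep \<tau> A le xs x"
    define strat where "strat = (\<lambda>l::'i list. last (hist ch (\<lambda>i. l ! i) (length l - 1)))"
    show "\<exists>strat :: 'i list \<Rightarrow> 'i. \<forall>ts :: nat \<Rightarrow> 'i. (\<forall>n. ts n \<in> A) \<longrightarrow>
           (let \<alpha> = (\<lambda>n. strat (map ts [0..<Suc n])) in
              (\<forall>n. \<alpha> n \<in> A) \<and> (\<forall>n. strictly le (\<alpha> n) (\<alpha> (Suc n)))
              \<and> (\<forall>n. strictly le (ts n) (\<alpha> n))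
              \<and> uo_conv_in F UNIV (\<le>) (\<lambda>n. xs (\<alpha> n)) x)"
    proof (intro exI[of _ strat] allI impI)
      fix ts :: "nat \<Rightarrow> 'i" assume tsA: "\<forall>n. ts n \<in> A"
      define \<alpha> where "\<alpha> = (\<lambda>n. last (hist ch ts n))"
      have aeq: "(\<lambda>n. strat (map ts [0..<Suc n])) = \<alpha>"
      proof
        fix n
        have "hist ch (\<lambda>i. map ts [0..<Suc n] ! i) n = hist ch ts n"
          by (rule hist_cong) (auto simp: nth_map nth_upt simp del: upt_Suc)
        then show "strat (map ts [0..<Suc n]) = \<alpha> n" unfolding strat_def \<alpha>_def by simp
      qed
      have astep: "\<alpha> k = ch (map \<alpha> [0..<k]) (ts k)" for k
        unfolding \<alpha>_def using hist_step[of ch ts k] by simp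
      have spec: "\<alpha> k \<in> A \<and> strictly le (ts k) (\<alpha> k)
          \<and> (map \<alpha> [0..<k] \<noteq> [] \<and> last (map \<alpha> [0..<k]) \<in> A \<longrightarrow> strictly le (last (map \<alpha> [0..<k])) (\<alpha> k))
          \<and> condp \<tau> xs x (map \<alpha> [0..<k]) (\<alpha> k)" for k
        unfolding astep[of k] ch_def using choose_spec[OF ls lic dir conv nl tsA[rule_format, of k]] by blast
      have aA: "\<alpha> n \<in> A" for n using spec by blast
      have ats: "strictly le (ts n) (\<alpha> n)" for n using spec by blast
      have ast: "strictly le (\<alpha> n) (\<alpha> (Suc n))" for n
      proof -
        have "last (map \<alpha> [0..<Suc n]) = \<alpha> n" by simp
        then show ?thesis using spec[of "Suc n"] aA[of n] by simp
      qed
      define UU where "UU = (\<lambda>N. \<bar>x\<bar> + (\<Sum>i<N. \<bar>(\<lambda>k. xs (\<alpha> k)) i\<bar>))"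
      have H: "\<forall>k N. N \<le> k \<longrightarrow> inf \<bar>(\<lambda>k. xs (\<alpha> k)) k - x\<bar> (UU N) \<in> Us \<tau> (UU N) (Suc k)"
      proof (intro allI impI)
        fix k N :: nat assume Nk: "N \<le> k"
        have "UUp xs x (map \<alpha> [0..<k]) N = UU N"
          unfolding UUp_def UU_def using Nk by (intro arg_cong[where f="\<lambda>s. \<bar>x\<bar> + s"] sum.cong) auto
        moreover have "condp \<tau> xs x (map \<alpha> [0..<k]) (\<alpha> k)" using spec by blast
        ultimately show "inf \<bar>(\<lambda>k. xs (\<alpha> k)) k - x\<bar> (UU N) \<in> Us \<tau> (UU N) (Suc k)"
          unfolding condp_def using Nk by auto
      qed
      have dF: "\<forall>k. (\<lambda>k. xs (\<alpha> k)) k \<in> F" using netF aA by blast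
      have uo: "uo_conv_in F UNIV (\<le>) (\<lambda>k. xs (\<alpha> k)) x"
        by (rule main_uo[OF arch lic reg xF dF UU_def H])
      show "let \<alpha> = (\<lambda>n. strat (map ts [0..<Suc n])) in
              (\<forall>n. \<alpha> n \<in> A) \<and> (\<forall>n. strictly le (\<alpha> n) (\<alpha> (Suc n)))
              \<and> (\<forall>n. strictly le (ts n) (\<alpha> n))
              \<and> uo_conv_in F UNIV (\<le>) (\<lambda>n. xs (\<alpha> n)) x"
        unfolding Let_def aeq using aA ast ats uo by blast
    qed
  qed
  have P4: "(\<not> (\<exists>aL\<in>A. \<forall>a\<in>A. le a aL)) \<longrightarrow>
        (\<exists>\<alpha> :: nat \<Rightarrow> 'i. (\<forall>n. \<alpha> n \<in> A) \<and> (\<forall>n. strictly le (\<alpha> n) (\<alpha> (Suc n)))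
              \<and> uo_conv_in F UNIV (\<le>) (\<lambda>n. xs (\<alpha> n)) x)"
  proof
    assume nl0: "\<not> (\<exists>aL\<in>A. \<forall>a\<in>A. le a aL)"
    then obtain strat :: "'i list \<Rightarrow> 'i" where st: "\<forall>ts :: nat \<Rightarrow> 'i. (\<forall>n. ts n \<in> A) \<longrightarrow>
           (let \<alpha> = (\<lambda>n. strat (map ts [0..<Suc n])) in
              (\<forall>n. \<alpha> n \<in> A) \<and> (\<forall>n. strictly le (\<alpha> n) (\<alpha> (Suc n)))
              \<and> (\<forall>n. strictly le (ts n) (\<alpha> n))
              \<and> uo_conv_in F UNIV (\<le>) (\<lambda>n. xs (\<alpha> n)) x)" using P2 by blast
    obtain a0 where a0: "a0 \<in> A" using dir_ne[OF dir] by blast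
    have tsA0: "(\<lambda>_::nat. a0) n \<in> A" for n using a0 by simp
    note st[rule_format, of "\<lambda>_::nat. a0", OF tsA0]
    then show "\<exists>\<alpha> :: nat \<Rightarrow> 'i. (\<forall>n. \<alpha> n \<in> A) \<and> (\<forall>n. strictly le (\<alpha> n) (\<alpha> (Suc n)))
              \<and> uo_conv_in F UNIV (\<le>) (\<lambda>n. xs (\<alpha> n)) x"
      unfolding Let_def by - (rule exI[of _ "\<lambda>n. strat (map (\<lambda>_. a0) [0..<Suc n])"], blast)
  qed
  have P3: "\<exists>\<alpha> :: nat \<Rightarrow> 'i. (\<forall>n. \<alpha> n \<in> A) \<and> (\<forall>n. le (\<alpha> n) (\<alpha> (Suc n)))
              \<and> uo_conv_in F UNIV (\<le>) (\<lambda>n. xs (\<alpha> n)) x"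
  proof (cases "\<exists>aL\<in>A. \<forall>a\<in>A. le a aL")
    case True
    then obtain aL where aL: "aL \<in> A" "\<forall>a\<in>A. le a aL" by blast
    have "x = xs aL" using P1 aL by blast
    then have "uo_conv_in F UNIV (\<le>) (\<lambda>n::nat. xs ((\<lambda>_. aL) n)) x"
      using uo_const[OF vs, of x] by simp
    then show ?thesis using aL by (intro exI[of _ "\<lambda>_. aL"]) auto
  next
    case False
    then obtain \<alpha> :: "nat \<Rightarrow> 'i" where "(\<forall>n. \<alpha> n \<in> A)" "(\<forall>n. strictly le (\<alpha> n) (\<alpha> (Suc n)))"
      "uo_conv_in F UNIV (\<le>) (\<lambda>n. xs (\<alpha> n)) x" using P4 by blast
    then show ?thesis unfolding strictly_def by blast
  qed
  show ?thesis using P1 P2 P3 P4 by blast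
qed


end
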